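(* Let $(E,\|\cdot\|)$ be a normed space over $K$ and let $A$ be a local compactoid in $E$. If the linear span $[A]$, with the norm restricted from $E$, is a Banach space, then $A$ is the sum of a compactoid and a space of finite type, i.e. $A=B+D$ for some compactoid $B\subseteq E$ and some linear subspace $D\subseteq E$ which, with the induced topology, is of finite type.
   Context: $K$ is a field complete with respect to a non-trivial non-archimedean absolute value, $B_K=\{x\in K:|x|\le1\}$; norms and seminorms are non-archimedean. Absolutely convex = $B_K$-submodule; $[X]$ is the linear span and $\mathrm{aco}\,X$ the absolutely convex hull. A compactoid is an absolutely convex $B$ such that for every zero neighbourhood $U$ there is a finite $S$ with $B\subseteq U+\mathrm{aco}\,S$. A local compactoid in $E$ is an absolutely convex $A$ such that for every zero neighbourhood $U$ there is a finite $S\subseteq E$ with $A\subseteq U+[S]$. A locally convex space $D$ is of finite type if for every continuous seminorm $p$ on $D$, the normed space $D/\{p=0\}$ is finite-dimensional. *)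

theory Defs
  imports "HOL-Analysis.Analysis"
begin

definition nonarch_abs :: "('k::field \<Rightarrow> real) \<Rightarrow> bool" where
  "nonarch_abs v \<longleftrightarrow>
     (\<forall>x. v x \<ge> 0) \<and> (\<forall>x. v x = 0 \<longleftrightarrow> x = 0) \<and>
     (\<forall>x y. v (x * y) = v x * v y) \<and>
     (\<forall>x y. v (x + y) \<le> max (v x) (v y))"

definition nontrivial_abs :: "('k::field \<Rightarrow> real) \<Rightarrow> bool" where
  "nontrivial_abs v \<longleftrightarrow> (\<exists>x. x \<noteq> 0 \<and> v x \<noteq> 1)"

definition complete_abs :: "('k::field \<Rightarrow> real) \<Rightarrow> bool" where
  "complete_abs v \<longleftrightarrow>
     (\<forall>f :: nat \<Rightarrow> 'k.
        (\<forall>e>0. \<exists>M. \<forall>m\<ge>M. \<forall>n\<ge>M. v (f m - f n) < e) \<longrightarrow>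
        (\<exists>l. \<forall>e>0. \<exists>M. \<forall>n\<ge>M. v (f n - l) < e))"

definition nonarch_norm ::
  "('k::field \<Rightarrow> real) \<Rightarrow> ('k \<Rightarrow> 'e::ab_group_add \<Rightarrow> 'e) \<Rightarrow> ('e \<Rightarrow> real) \<Rightarrow> bool" where
  "nonarch_norm v sc N \<longleftrightarrow>
     (\<forall>x. N x \<ge> 0) \<and> (\<forall>x. N x = 0 \<longleftrightarrow> x = 0) \<and>
     (\<forall>a x. N (sc a x) = v a * N x) \<and>
     (\<forall>x y. N (x + y) \<le> max (N x) (N y))"

definition nonarch_seminorm_on ::
  "('k::field \<Rightarrow> real) \<Rightarrow> ('k \<Rightarrow> 'e::ab_group_add \<Rightarrow> 'e) \<Rightarrow> 'e set \<Rightarrow> ('e \<Rightarrow> real) \<Rightarrow> bool" where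
  "nonarch_seminorm_on v sc D p \<longleftrightarrow>
     (\<forall>x\<in>D. p x \<ge> 0) \<and>
     (\<forall>a. \<forall>x\<in>D. p (sc a x) = v a * p x) \<and>
     (\<forall>x\<in>D. \<forall>y\<in>D. p (x + y) \<le> max (p x) (p y))"

definition continuous_on_norm :: "('e::ab_group_add \<Rightarrow> real) \<Rightarrow> 'e set \<Rightarrow> ('e \<Rightarrow> real) \<Rightarrow> bool" where
  "continuous_on_norm N D p \<longleftrightarrow>
     (\<forall>x\<in>D. \<forall>e>0. \<exists>d>0. \<forall>y\<in>D. N (y - x) < d \<longrightarrow> \<bar>p y - p x\<bar> < e)"

definition abs_convex ::
  "('k::field \<Rightarrow> real) \<Rightarrow> ('k \<Rightarrow> 'e::ab_group_add \<Rightarrow> 'e) \<Rightarrow> 'e set \<Rightarrow> bool" where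
  "abs_convex v sc A \<longleftrightarrow>
     0 \<in> A \<and> (\<forall>x\<in>A. \<forall>y\<in>A. x + y \<in> A) \<and> (\<forall>a x. v a \<le> 1 \<and> x \<in> A \<longrightarrow> sc a x \<in> A)"

definition aco ::
  "('k::field \<Rightarrow> real) \<Rightarrow> ('k \<Rightarrow> 'e::ab_group_add \<Rightarrow> 'e) \<Rightarrow> 'e set \<Rightarrow> 'e set" where
  "aco v sc S = (abs_convex v sc) hull S"

definition msum :: "'e::ab_group_add set \<Rightarrow> 'e set \<Rightarrow> 'e set" where
  "msum A B = {a + b | a b. a \<in> A \<and> b \<in> B}"

definition zero_nhd :: "('e::ab_group_add \<Rightarrow> real) \<Rightarrow> 'e set \<Rightarrow> bool" where
  "zero_nhd N U \<longleftrightarrow> (\<exists>e>0. {x. N x < e} \<subseteq> U)"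

definition compactoid ::
  "('k::field \<Rightarrow> real) \<Rightarrow> ('k \<Rightarrow> 'e::ab_group_add \<Rightarrow> 'e) \<Rightarrow> ('e \<Rightarrow> real) \<Rightarrow> 'e set \<Rightarrow> bool" where
  "compactoid v sc N B \<longleftrightarrow> abs_convex v sc B \<and>
     (\<forall>U. zero_nhd N U \<longrightarrow> (\<exists>S. finite S \<and> B \<subseteq> msum U (aco v sc S)))"

definition local_compactoid ::
  "('k::field \<Rightarrow> real) \<Rightarrow> ('k \<Rightarrow> 'e::ab_group_add \<Rightarrow> 'e) \<Rightarrow> ('e \<Rightarrow> real) \<Rightarrow> 'e set \<Rightarrow> bool" where
  "local_compactoid v sc N A \<longleftrightarrow> abs_convex v sc A \<and>
     (\<forall>U. zero_nhd N U \<longrightarrow> (\<exists>S. finite S \<and> A \<subseteq> msum U (module.span sc S)))"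

definition complete_wrt :: "('e::ab_group_add \<Rightarrow> real) \<Rightarrow> 'e set \<Rightarrow> bool" where
  "complete_wrt N X \<longleftrightarrow>
     (\<forall>f :: nat \<Rightarrow> 'e. (\<forall>n. f n \<in> X) \<longrightarrow>
        (\<forall>e>0. \<exists>M. \<forall>m\<ge>M. \<forall>n\<ge>M. N (f m - f n) < e) \<longrightarrow>
        (\<exists>l\<in>X. \<forall>e>0. \<exists>M. \<forall>n\<ge>M. N (f n - l) < e))"

text \<open>D (with topology induced by N) is of finite type: for every continuous seminorm p on D,
  D / {p = 0} is finite-dimensional, i.e. D is spanned modulo the kernel of p by finitely many vectors.\<close>
definition finite_type ::
  "('k::field \<Rightarrow> real) \<Rightarrow> ('k \<Rightarrow> 'e::ab_group_add \<Rightarrow> 'e) \<Rightarrow> ('e \<Rightarrow> real) \<Rightarrow> 'e set \<Rightarrow> bool" where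
  "finite_type v sc N D \<longleftrightarrow>
     (\<forall>p. nonarch_seminorm_on v sc D p \<and> continuous_on_norm N D p \<longrightarrow>
        (\<exists>S. finite S \<and> S \<subseteq> D \<and> D \<subseteq> msum (module.span sc S) {x\<in>D. p x = 0}))"

end

theory Submission
  imports Defs
begin
locale navs = vector_space sc for sc :: "'k::field \<Rightarrow> 'e::ab_group_add \<Rightarrow> 'e" +
  fixes v :: "'k \<Rightarrow> real" and N :: "'e \<Rightarrow> real" and pi :: 'k
  assumes vabs: "nonarch_abs v" and vcpl: "complete_abs v" and Nnorm: "nonarch_norm v sc N"
    and pi_pos: "0 < v pi" and pi_lt1: "v pi < 1"
begin

lemma v_nonneg: "v a \<ge> 0" using vabs unfolding nonarch_abs_def by auto
lemma v_eq0: "v a = 0 \<longleftrightarrow> a = 0" using vabs unfolding nonarch_abs_def by auto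
lemma v_mult: "v (a * b) = v a * v b" using vabs unfolding nonarch_abs_def by auto
lemma v_ultra: "v (a + b) \<le> max (v a) (v b)" using vabs unfolding nonarch_abs_def by auto
lemma v0[simp]: "v 0 = 0" using v_eq0 by auto
lemma v1[simp]: "v 1 = 1"
proof -
  have "v 1 = v 1 * v 1" using v_mult[of 1 1] by simp
  moreover have "v 1 \<noteq> 0" using v_eq0 by simp
  ultimately show ?thesis by (metis mult_cancel_left2)
qed
lemma v_neg[simp]: "v (- a) = v a"
proof -
  have h: "v (-1) * v (-1) = 1" using v_mult[of "-1" "-1"] by simp
  have "(v (-1) - 1) * (v (-1) + 1) = 0" using h by (simp add: algebra_simps)
  moreover have "v (-1) + 1 > 0" using v_nonneg[of "-1"] by linarith
  ultimately have "v (-1) = 1" by simp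
  moreover have "v (- a) = v (-1) * v a" using v_mult[of "-1" a] by simp
  ultimately show ?thesis by simp
qed
lemma v_inverse: "v (inverse a) = inverse (v a)"
proof (cases "a = 0")
  case False
  have "v (inverse a) * v a = 1" using v_mult[of "inverse a" a] False by simp
  hence "v a * v (inverse a) = 1" by (simp add: mult.commute)
  thus ?thesis using inverse_unique by metis
qed simp
lemma v_divide: "v (a / b) = v a / v b"
  by (simp add: divide_inverse v_mult v_inverse)
lemma v_pow: "v (a ^ n) = v a ^ n"
  by (induct n) (simp_all add: v_mult)
lemma v_commute: "v (a - b) = v (b - a)"
  by (metis minus_diff_eq v_neg)
lemma v_tri: "v (a + b) \<le> v a + v b"
  using v_ultra[of a b] v_nonneg[of a] v_nonneg[of b] by linarith
lemma v_diff_tri: "v (a - c) \<le> max (v (a - b)) (v (b - c))"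
  using v_ultra[of "a - b" "b - c"] by simp

lemma N_nonneg: "N x \<ge> 0" using Nnorm unfolding nonarch_norm_def by auto
lemma N_eq0: "N x = 0 \<longleftrightarrow> x = 0" using Nnorm unfolding nonarch_norm_def by auto
lemma N_sc: "N (sc a x) = v a * N x" using Nnorm unfolding nonarch_norm_def by auto
lemma N_ultra: "N (x + y) \<le> max (N x) (N y)" using Nnorm unfolding nonarch_norm_def by auto
lemma N0[simp]: "N 0 = 0" using N_eq0 by auto
lemma N_pos: "x \<noteq> 0 \<Longrightarrow> N x > 0" using N_eq0 N_nonneg by (metis less_eq_real_def)
lemma N_neg[simp]: "N (- x) = N x"
  using N_sc[of "-1" x] by simp
lemma N_commute: "N (x - y) = N (y - x)"
  by (metis minus_diff_eq N_neg)
lemma N_diff: "N (x - y) \<le> max (N x) (N y)"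
  using N_ultra[of x "- y"] by simp
lemma N_diff_tri: "N (x - z) \<le> max (N (x - y)) (N (y - z))"
  using N_ultra[of "x - y" "y - z"] by simp
lemma N_tri: "N (x + y) \<le> N x + N y"
  using N_ultra[of x y] N_nonneg[of x] N_nonneg[of y] by linarith
lemma N_strict:
  assumes "N y < N x" shows "N (x + y) = N x"
proof -
  have "N x \<le> max (N (x + y)) (N y)" using N_diff[of "x + y" y] by simp
  hence "N x \<le> N (x + y)" using assms by auto
  moreover have "N (x + y) \<le> N x" using N_ultra[of x y] assms by auto
  ultimately show ?thesis by simp
qed
lemma N_ge_of_strict:
  assumes "N y < N x" shows "N x \<le> N (x + y)"
  using N_strict[OF assms] by simp

lemma N_sum_le: "finite I \<Longrightarrow> 0 \<le> M \<Longrightarrow> (\<And>i. i \<in> I \<Longrightarrow> N (f i) \<le> M) \<Longrightarrow> N (sum f I) \<le> M"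
proof (induct I rule: finite_induct)
  case (insert x F)
  have a: "N (f x) \<le> M" "N (sum f F) \<le> M" using insert by auto
  have "N (sum f (insert x F)) = N (f x + sum f F)" using insert(1,2) by simp
  also have "\<dots> \<le> max (N (f x)) (N (sum f F))" by (rule N_ultra)
  also have "\<dots> \<le> M" using a by simp
  finally show ?case .
qed simp

lemma N_sum_less: "finite I \<Longrightarrow> 0 < M \<Longrightarrow> (\<And>i. i \<in> I \<Longrightarrow> N (f i) < M) \<Longrightarrow> N (sum f I) < M"
proof (induct I rule: finite_induct)
  case (insert x F)
  have a: "N (f x) < M" "N (sum f F) < M" using insert by auto
  have "N (sum f (insert x F)) = N (f x + sum f F)" using insert(1,2) by simp
  also have "\<dots> \<le> max (N (f x)) (N (sum f F))" by (rule N_ultra)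
  also have "\<dots> < M" using a by simp
  finally show ?case .
qed simp

lemma N_sum_tri: "N (sum f I) \<le> (\<Sum>i\<in>I. N (f i))"
proof (induct I rule: infinite_finite_induct)
  case (insert x F)
  have "N (sum f (insert x F)) = N (f x + sum f F)" using insert(1,2) by simp
  also have "\<dots> \<le> N (f x) + N (sum f F)" by (rule N_tri)
  also have "\<dots> \<le> N (f x) + (\<Sum>i\<in>F. N (f i))" using insert(3) by simp
  finally show ?case using insert(1,2) by simp
qed simp_all

lemma pi_ne0: "pi \<noteq> 0"
proof
  assume "pi = 0" hence "v pi = 0" by simp
  thus False using pi_pos by simp
qed

lemma pow_small: assumes "0 < e" shows "\<exists>n. v pi ^ n < e"
  using real_arch_pow_inv[OF assms pi_lt1] .

end

context navs begin

lemma span_image_rep: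
  assumes "finite I" "x \<in> span (y ` I)"
  shows "\<exists>\<alpha>. x = (\<Sum>b\<in>I. sc (\<alpha> b) (y b))"
  using assms(2)
proof (induct rule: span_induct_alt)
  case base
  show ?case by (rule exI[of _ "\<lambda>_. 0"]) simp
next
  case (step c x0 z)
  then obtain b0 where b0: "b0 \<in> I" "x0 = y b0" by auto
  from step obtain \<alpha> where \<alpha>: "z = (\<Sum>b\<in>I. sc (\<alpha> b) (y b))" by auto
  define \<beta> where "\<beta> = (\<lambda>b. \<alpha> b + (if b = b0 then c else 0))"
  have "(\<Sum>b\<in>I. sc (\<beta> b) (y b)) = (\<Sum>b\<in>I. sc (\<alpha> b) (y b) + (if b = b0 then sc c (y b) else 0))"
    unfolding \<beta>_def by (intro sum.cong) (auto simp: scale_left_distrib)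
  also have "\<dots> = z + sc c x0"
    using assms(1) b0 by (simp add: sum.distrib \<alpha>)
  finally show ?case by (intro exI[of _ \<beta>]) (simp add: add.commute)
qed

lemma span_image_sum: "(\<Sum>b\<in>I. sc (\<alpha> b) (y b)) \<in> span (y ` I)"
  by (intro span_sum span_scale span_base) auto

lemma sum_sc_diff: "(\<Sum>b\<in>I. sc (\<alpha> b) (y b)) - (\<Sum>b\<in>I. sc (\<beta> b) (y b)) = (\<Sum>b\<in>I. sc (\<alpha> b - \<beta> b) (y b))"
  by (simp add: sum_subtractf scale_left_diff_distrib)

definition orth :: "real \<Rightarrow> 'i set \<Rightarrow> ('i \<Rightarrow> 'e) \<Rightarrow> bool" where
  "orth \<tau> I y \<longleftrightarrow> 0 < \<tau> \<and> (\<forall>b\<in>I. y b \<noteq> 0) \<and>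
     (\<forall>\<alpha>. \<forall>b\<in>I. \<tau> * v (\<alpha> b) * N (y b) \<le> N (\<Sum>c\<in>I. sc (\<alpha> c) (y c)))"

lemma orth_ineq:
  assumes "orth \<tau> I y" "b \<in> I"
  shows "\<tau> * v (\<alpha> b) * N (y b) \<le> N (\<Sum>c\<in>I. sc (\<alpha> c) (y c))"
  using assms unfolding orth_def by blast

lemma orth_coeff:
  assumes "orth \<tau> I y" "b \<in> I"
  shows "v (\<alpha> b) \<le> N (\<Sum>c\<in>I. sc (\<alpha> c) (y c)) / (\<tau> * N (y b))"
proof -
  have p: "\<tau> > 0" "N (y b) > 0" using assms N_pos unfolding orth_def by auto
  have "\<tau> * v (\<alpha> b) * N (y b) \<le> N (\<Sum>c\<in>I. sc (\<alpha> c) (y c))" by (rule orth_ineq[OF assms])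
  thus ?thesis using p by (simp add: field_simps)
qed

lemma orth_subset:
  assumes "orth \<tau> I y" "J \<subseteq> I" "finite I"
  shows "orth \<tau> J y"
  unfolding orth_def
proof (intro conjI allI ballI)
  show "0 < \<tau>" "\<And>b. b \<in> J \<Longrightarrow> y b \<noteq> 0" using assms unfolding orth_def by auto
  fix \<alpha> :: "_ \<Rightarrow> 'k" and b assume b: "b \<in> J"
  define \<beta> where "\<beta> = (\<lambda>c. if c \<in> J then \<alpha> c else 0)"
  have "(\<Sum>c\<in>I. sc (\<beta> c) (y c)) = (\<Sum>c\<in>J. sc (\<beta> c) (y c))"
    using assms(2,3) by (intro sum.mono_neutral_right) (auto simp: \<beta>_def)
  also have "\<dots> = (\<Sum>c\<in>J. sc (\<alpha> c) (y c))" by (intro sum.cong) (auto simp: \<beta>_def)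
  finally have e: "(\<Sum>c\<in>I. sc (\<beta> c) (y c)) = (\<Sum>c\<in>J. sc (\<alpha> c) (y c))" .
  have "\<tau> * v (\<beta> b) * N (y b) \<le> N (\<Sum>c\<in>I. sc (\<beta> c) (y c))"
    using orth_ineq[OF assms(1)] assms(2) b by blast
  thus "\<tau> * v (\<alpha> b) * N (y b) \<le> N (\<Sum>c\<in>J. sc (\<alpha> c) (y c))" using e b by (simp add: \<beta>_def)
qed

lemma orth_unique:
  assumes "orth \<tau> I y" "b \<in> I" "(\<Sum>c\<in>I. sc (\<alpha> c) (y c)) = (\<Sum>c\<in>I. sc (\<beta> c) (y c))"
  shows "\<alpha> b = \<beta> b"
proof -
  have "\<tau> * v (\<alpha> b - \<beta> b) * N (y b) \<le> N (\<Sum>c\<in>I. sc (\<alpha> c - \<beta> c) (y c))"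
    using orth_ineq[OF assms(1,2), of "\<lambda>c. \<alpha> c - \<beta> c"] by simp
  also have "(\<Sum>c\<in>I. sc (\<alpha> c - \<beta> c) (y c)) = 0" using assms(3) sum_sc_diff[of \<alpha> y I \<beta>] by simp
  finally have "\<tau> * v (\<alpha> b - \<beta> b) * N (y b) \<le> 0" by simp
  moreover have "\<tau> > 0" "N (y b) > 0" using assms N_pos unfolding orth_def by auto
  ultimately have "v (\<alpha> b - \<beta> b) \<le> 0"
    by (metis mult_le_0_iff mult_pos_pos not_less)
  hence "v (\<alpha> b - \<beta> b) = 0" using v_nonneg[of "\<alpha> b - \<beta> b"] by linarith
  thus ?thesis using v_eq0 by simp
qed

lemma orth_complete:
  fixes x :: "nat \<Rightarrow> 'e"
  assumes fin: "finite I" and o: "orth \<tau> I y"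
    and xs: "\<And>n. x n \<in> span (y ` I)"
    and cau: "\<And>e. e > 0 \<Longrightarrow> \<exists>M. \<forall>m\<ge>M. \<forall>n\<ge>M. N (x m - x n) < e"
  shows "\<exists>l \<in> span (y ` I). \<forall>e>0. \<exists>M. \<forall>n\<ge>M. N (x n - l) < e"
proof -
  have "\<forall>n. \<exists>\<alpha>. x n = (\<Sum>b\<in>I. sc (\<alpha> b) (y b))" using span_image_rep[OF fin xs] by blast
  then obtain \<alpha> where \<alpha>: "\<And>n. x n = (\<Sum>b\<in>I. sc (\<alpha> n b) (y b))" by metis
  have tp: "\<tau> > 0" using o unfolding orth_def by auto
  have "\<forall>b\<in>I. \<exists>l. \<forall>e>0. \<exists>M. \<forall>n\<ge>M. v (\<alpha> n b - l) < e"
  proof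
    fix b assume b: "b \<in> I"
    have yp: "N (y b) > 0" using o b N_pos unfolding orth_def by auto
    have "\<forall>e>0. \<exists>M. \<forall>m\<ge>M. \<forall>n\<ge>M. v (\<alpha> m b - \<alpha> n b) < e"
    proof (intro allI impI)
      fix e :: real assume e: "e > 0"
      then obtain M where M: "\<And>m n. m \<ge> M \<Longrightarrow> n \<ge> M \<Longrightarrow> N (x m - x n) < e * (\<tau> * N (y b))"
        using cau[of "e * (\<tau> * N (y b))"] tp yp by auto
      show "\<exists>M. \<forall>m\<ge>M. \<forall>n\<ge>M. v (\<alpha> m b - \<alpha> n b) < e"
      proof (intro exI allI impI)
        fix m n assume mn: "m \<ge> M" "n \<ge> M"
        have "x m - x n = (\<Sum>c\<in>I. sc (\<alpha> m c - \<alpha> n c) (y c))" using \<alpha> sum_sc_diff by metis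
        hence "v (\<alpha> m b - \<alpha> n b) \<le> N (x m - x n) / (\<tau> * N (y b))"
          using orth_coeff[OF o b, of "\<lambda>c. \<alpha> m c - \<alpha> n c"] by simp
        also have "\<dots> < e" using M[OF mn] tp yp by (simp add: field_simps)
        finally show "v (\<alpha> m b - \<alpha> n b) < e" .
      qed
    qed
    thus "\<exists>l. \<forall>e>0. \<exists>M. \<forall>n\<ge>M. v (\<alpha> n b - l) < e"
      using vcpl[unfolded complete_abs_def, rule_format, of "\<lambda>n. \<alpha> n b"] by blast
  qed
  then obtain c where c: "\<And>b. b \<in> I \<Longrightarrow> \<forall>e>0. \<exists>M. \<forall>n\<ge>M. v (\<alpha> n b - c b) < e"
    by metis
  define l where "l = (\<Sum>b\<in>I. sc (c b) (y b))"
  have lim: "(\<lambda>n. \<Sum>b\<in>I. v (\<alpha> n b - c b) * N (y b)) \<longlonglongrightarrow> (\<Sum>b\<in>I. 0 * N (y b))"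
  proof (intro tendsto_sum tendsto_mult tendsto_const)
    fix b assume b: "b \<in> I"
    show "(\<lambda>n. v (\<alpha> n b - c b)) \<longlonglongrightarrow> 0"
    proof (rule LIMSEQ_I)
      fix r :: real assume "r > 0"
      then obtain M where "\<forall>n\<ge>M. v (\<alpha> n b - c b) < r" using c[OF b] by blast
      thus "\<exists>no. \<forall>n\<ge>no. norm (v (\<alpha> n b - c b) - 0) < r" using v_nonneg by auto
    qed
  qed
  show ?thesis
  proof (intro bexI allI impI)
    show "l \<in> span (y ` I)" unfolding l_def by (rule span_image_sum)
    fix e :: real assume e: "e > 0"
    obtain M where M: "\<And>n. n \<ge> M \<Longrightarrow> norm ((\<Sum>b\<in>I. v (\<alpha> n b - c b) * N (y b)) - 0) < e"
      using LIMSEQ_D[OF lim[simplified] e] by auto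
    show "\<exists>M. \<forall>n\<ge>M. N (x n - l) < e"
    proof (intro exI allI impI)
      fix n assume n: "n \<ge> M"
      have "x n - l = (\<Sum>b\<in>I. sc (\<alpha> n b - c b) (y b))" unfolding l_def using \<alpha> sum_sc_diff by metis
      hence "N (x n - l) \<le> (\<Sum>b\<in>I. N (sc (\<alpha> n b - c b) (y b)))" using N_sum_tri by metis
      also have "\<dots> = (\<Sum>b\<in>I. v (\<alpha> n b - c b) * N (y b))" by (simp add: N_sc)
      also have "\<dots> < e" using M[OF n] by simp
      finally show "N (x n - l) < e" .
    qed
  qed
qed

end

context navs begin

lemma dist_pos_lemma:
  assumes fin: "finite I" and o: "orth \<tau> I y" and hn: "h \<notin> span (y ` I)"
  shows "\<exists>\<delta>>0. \<forall>g\<in>span (y ` I). \<delta> \<le> N (h - g)"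
proof (rule ccontr)
  assume "\<not> ?thesis"
  hence a: "\<forall>\<delta>>0. \<exists>g\<in>span (y ` I). N (h - g) < \<delta>" by (auto simp: not_le)
  have "\<forall>n::nat. \<exists>g\<in>span (y ` I). N (h - g) < inverse (real (Suc n))"
    using a by simp
  then obtain g where g: "\<And>n. g n \<in> span (y ` I)" "\<And>n. N (h - g n) < inverse (real (Suc n))"
    by metis
  have inv_mono: "inverse (real (Suc n)) \<le> inverse (real (Suc M))" if "n \<ge> M" for n M
    using that by (simp add: le_imp_inverse_le)
  have "\<exists>M. \<forall>m\<ge>M. \<forall>n\<ge>M. N (g m - g n) < e" if e: "e > 0" for e
  proof -
    obtain M where M: "inverse (real (Suc M)) < e" using reals_Archimedean[OF e] by auto
    show ?thesis
    proof (intro exI allI impI)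
      fix m n assume mn: "m \<ge> M" "n \<ge> M"
      have "N (g m - g n) \<le> max (N (g m - h)) (N (h - g n))" by (rule N_diff_tri)
      also have "\<dots> < e"
      proof -
        have a1: "N (g m - h) < e" using g(2)[of m] inv_mono[OF mn(1)] M N_commute[of "g m" h] by linarith
        have a2: "N (h - g n) < e" using g(2)[of n] inv_mono[OF mn(2)] M by linarith
        show ?thesis using a1 a2 by simp
      qed
      finally show "N (g m - g n) < e" .
    qed
  qed
  from orth_complete[OF fin o g(1) this] obtain l where
    l: "l \<in> span (y ` I)" "\<And>e. e > 0 \<Longrightarrow> \<exists>M. \<forall>n\<ge>M. N (g n - l) < e" by blast
  have small: "N (h - l) < e" if e: "e > 0" for e
  proof -
    obtain M where M: "\<forall>n\<ge>M. N (g n - l) < e" using l(2)[OF e] by blast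
    obtain M' where M': "inverse (real (Suc M')) < e" using reals_Archimedean[OF e] by auto
    define n where "n = max M M'"
    have "N (h - l) \<le> max (N (h - g n)) (N (g n - l))" by (rule N_diff_tri)
    also have "\<dots> < e"
    proof -
      have n: "n \<ge> M" "n \<ge> M'" unfolding n_def by auto
      have a1: "N (h - g n) < e" using g(2)[of n] inv_mono[OF n(2)] M' by linarith
      have a2: "N (g n - l) < e" using M n(1) by blast
      show ?thesis using a1 a2 by simp
    qed
    finally show ?thesis .
  qed
  have "N (h - l) = 0"
  proof (rule ccontr)
    assume "N (h - l) \<noteq> 0" hence "N (h - l) > 0" using N_nonneg[of "h - l"] by linarith
    thus False using small[of "N (h - l)"] by simp
  qed
  hence "h = l" using N_eq0 by simp
  thus False using hn l(1) by simp
qed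

lemma orth_exists:
  assumes t: "0 < t" "t < 1" and fin: "finite Hs" and ind: "independent Hs"
  shows "\<exists>y. orth (t ^ card Hs) Hs y \<and> span (y ` Hs) = span Hs \<and> (\<forall>b\<in>Hs. y b \<in> span Hs)"
  using fin ind
proof (induct Hs rule: finite_induct)
  case empty
  show ?case by (rule exI[of _ "\<lambda>b. b"]) (simp add: orth_def)
next
  case (insert h H)
  have indH: "independent H" and hn: "h \<notin> span H"
    using insert.prems insert.hyps(2) independent_insert[of h H] by auto
  obtain y' where y': "orth (t ^ card H) H y'" "span (y' ` H) = span H" "\<forall>b\<in>H. y' b \<in> span H"
    using insert.hyps(3)[OF indH] by blast
  have "\<exists>\<delta>>0. \<forall>g\<in>span H. \<delta> \<le> N (h - g)"
    using dist_pos_lemma[OF insert.hyps(1) y'(1), of h] hn unfolding y'(2) by simp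
  then obtain \<delta> where \<delta>: "\<delta> > 0" "\<And>g. g \<in> span H \<Longrightarrow> \<delta> \<le> N (h - g)"
    by blast
  define D where "D = (\<lambda>g. N (h - g)) ` span H"
  define d where "d = Inf D"
  have Dne: "D \<noteq> {}" unfolding D_def using span_zero by blast
  have Dbdd: "bdd_below D" unfolding D_def by (rule bdd_belowI[of _ 0]) (auto simp: N_nonneg)
  have dlow: "\<And>g. g \<in> span H \<Longrightarrow> d \<le> N (h - g)"
    unfolding d_def by (rule cInf_lower[OF _ Dbdd]) (auto simp: D_def)
  have dge: "\<delta> \<le> d" unfolding d_def by (rule cInf_greatest[OF Dne]) (auto simp: D_def \<delta>(2))
  have dpos: "d > 0" using dge \<delta> by simp
  have "d < d / t" using dpos t by (simp add: field_simps)
  then obtain g0 where g0: "g0 \<in> span H" "N (h - g0) < d / t"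
    using cInf_lessD[OF Dne, of "d / t"] unfolding d_def D_def by auto
  have tN: "t * N (h - g0) < d" using g0(2) t by (simp add: field_simps)
  define y where "y = y'(h := h - g0)"
  have yH: "\<And>b. b \<in> H \<Longrightarrow> y b = y' b" unfolding y_def using insert.hyps(2) by auto
  have yh: "y h = h - g0" unfolding y_def by simp
  have hg0: "h - g0 \<noteq> 0" using hn g0(1) by auto
  have img: "y ` insert h H = insert (h - g0) (y' ` H)" using yH yh by auto
  have sp: "span (y ` insert h H) = span (insert h H)"
  proof -
    have "span (insert (h - g0) (y' ` H)) = {x. \<exists>k. x - sc k (h - g0) \<in> span H}"
      using span_insert[of "h - g0" "y' ` H"] y'(2) by simp
    also have "\<dots> = {x. \<exists>k. x - sc k h \<in> span H}"
    proof -
      have "x - sc k (h - g0) \<in> span H \<longleftrightarrow> x - sc k h \<in> span H" for x k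
      proof -
        have e: "x - sc k (h - g0) = (x - sc k h) + sc k g0" by (simp add: scale_right_diff_distrib algebra_simps)
        show ?thesis unfolding e by (rule span_add_eq2[OF span_scale[OF g0(1)]])
      qed
      thus ?thesis by simp
    qed
    also have "\<dots> = span (insert h H)" using span_insert[of h H] by simp
    finally show ?thesis using img by simp
  qed
  have ysp: "\<forall>b\<in>insert h H. y b \<in> span (insert h H)"
  proof
    fix b assume b: "b \<in> insert h H"
    show "y b \<in> span (insert h H)"
    proof (cases "b = h")
      case True
      have "g0 \<in> span (insert h H)" using g0(1) span_mono[of H "insert h H"] by auto
      thus ?thesis using True yh by (auto intro: span_diff span_base)
    next
      case False
      hence "b \<in> H" using b by simp
      thus ?thesis using yH y'(3) span_mono[of H "insert h H"] by auto
    qed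
  qed
  have o: "orth (t ^ card (insert h H)) (insert h H) y"
    unfolding orth_def
  proof (intro conjI allI ballI)
    show "0 < t ^ card (insert h H)" using t by simp
    fix b assume "b \<in> insert h H"
    thus "y b \<noteq> 0" using hg0 yh yH y'(1) unfolding orth_def by auto
  next
    fix \<alpha> :: "_ \<Rightarrow> 'k" and b assume b: "b \<in> insert h H"
    define x where "x = (\<Sum>c\<in>insert h H. sc (\<alpha> c) (y c))"
    define w where "w = (\<Sum>c\<in>H. sc (\<alpha> c) (y' c))"
    define a where "a = \<alpha> h"
    have xw: "x = sc a (h - g0) + w"
    proof -
      have "x = sc (\<alpha> h) (y h) + (\<Sum>c\<in>H. sc (\<alpha> c) (y c))"
        unfolding x_def using insert.hyps(1,2) by simp
      also have "(\<Sum>c\<in>H. sc (\<alpha> c) (y c)) = w" unfolding w_def by (intro sum.cong) (auto simp: yH)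
      finally show ?thesis by (simp add: yh a_def)
    qed
    have wH: "w \<in> span H" unfolding w_def using span_image_sum[of \<alpha> y' H] y'(2) by simp
    have c1: "t * v a * N (h - g0) \<le> N x"
    proof (cases "a = 0")
      case True thus ?thesis using N_nonneg[of x] by simp
    next
      case False
      define g' where "g' = g0 - sc (inverse a) w"
      have g'H: "g' \<in> span H" unfolding g'_def using g0(1) wH by (intro span_diff span_scale)
      have "x = sc a (h - g')"
        using False unfolding xw g'_def by (simp add: scale_right_diff_distrib algebra_simps)
      hence "N x = v a * N (h - g')" by (simp add: N_sc)
      moreover have "d \<le> N (h - g')" by (rule dlow[OF g'H])
      ultimately have "v a * d \<le> N x" using v_nonneg[of a] by (simp add: mult_left_mono)
      moreover have "v a * (t * N (h - g0)) \<le> v a * d" using tN v_nonneg[of a] by (simp add: mult_left_mono)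
      ultimately show ?thesis by (simp add: mult.assoc mult.left_commute)
    qed
    have c2: "t * N w \<le> N x"
    proof -
      have "w = x - sc a (h - g0)" using xw by simp
      hence "N w \<le> max (N x) (N (sc a (h - g0)))" using N_diff by metis
      hence "N w \<le> N x \<or> N w \<le> v a * N (h - g0)" by (auto simp: N_sc)
      moreover have "t * N x \<le> N x" using t N_nonneg[of x] by (intro mult_left_le_one_le) auto
      ultimately show ?thesis using c1 t
        by (metis (no_types, opaque_lifting) dual_order.trans less_eq_real_def mult.assoc mult_left_mono)
    qed
    have ck: "t ^ card H \<le> 1" using t by (simp add: power_le_one)
    have cardI: "card (insert h H) = Suc (card H)" using insert.hyps by simp
    show "t ^ card (insert h H) * v (\<alpha> b) * N (y b) \<le> N (\<Sum>c\<in>insert h H. sc (\<alpha> c) (y c))"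
    proof (cases "b = h")
      case True
      have "t ^ card (insert h H) * v (\<alpha> b) * N (y b) = t ^ card H * (t * v a * N (h - g0))"
        using True cardI yh a_def by simp
      also have "\<dots> \<le> 1 * (t * v a * N (h - g0))"
        using ck t v_nonneg[of a] N_nonneg[of "h - g0"] by (intro mult_right_mono) auto
      also have "\<dots> \<le> N x" using c1 by simp
      finally show ?thesis unfolding x_def .
    next
      case False
      hence bH: "b \<in> H" using b by simp
      have "t ^ card H * v (\<alpha> b) * N (y' b) \<le> N w" unfolding w_def by (rule orth_ineq[OF y'(1) bH])
      hence "t * (t ^ card H * v (\<alpha> b) * N (y' b)) \<le> t * N w" using t by simp
      also have "\<dots> \<le> N x" by (rule c2)
      finally show ?thesis using cardI yH[OF bH] unfolding x_def by (simp add: mult.assoc)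
    qed
  qed
  show ?case using o sp ysp by blast
qed

end

context navs begin

lemma ac_zero: "abs_convex v sc A \<Longrightarrow> 0 \<in> A" unfolding abs_convex_def by auto
lemma ac_add: "abs_convex v sc A \<Longrightarrow> x \<in> A \<Longrightarrow> y \<in> A \<Longrightarrow> x + y \<in> A" unfolding abs_convex_def by auto
lemma ac_sc: "abs_convex v sc A \<Longrightarrow> v a \<le> 1 \<Longrightarrow> x \<in> A \<Longrightarrow> sc a x \<in> A" unfolding abs_convex_def by auto
lemma ac_neg: "abs_convex v sc A \<Longrightarrow> x \<in> A \<Longrightarrow> - x \<in> A"
  using ac_sc[of A "-1" x] by simp
lemma ac_diff: "abs_convex v sc A \<Longrightarrow> x \<in> A \<Longrightarrow> y \<in> A \<Longrightarrow> x - y \<in> A"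
  using ac_add[of A x "- y"] ac_neg[of A y] by simp
lemma ac_sum: "abs_convex v sc A \<Longrightarrow> (\<And>b. b \<in> I \<Longrightarrow> f b \<in> A) \<Longrightarrow> sum f I \<in> A"
proof (induct I rule: infinite_finite_induct)
  case (infinite I) thus ?case by (simp add: ac_zero)
next
  case empty thus ?case by (simp add: ac_zero)
next
  case (insert x F) thus ?case by (simp add: ac_add)
qed
lemma ac_sum_sc: "abs_convex v sc A \<Longrightarrow> (\<And>b. b \<in> I \<Longrightarrow> v (\<alpha> b) \<le> 1 \<and> f b \<in> A) \<Longrightarrow>
    (\<Sum>b\<in>I. sc (\<alpha> b) (f b)) \<in> A"
  by (rule ac_sum) (auto intro: ac_sc)

lemma pow_decr: "m \<le> n \<Longrightarrow> v pi ^ n \<le> v pi ^ m"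
  using pi_pos pi_lt1 by (simp add: power_decreasing)

lemma pow_scal_small: assumes epos: "e > 0" shows "\<exists>n. \<forall>k\<ge>n. v pi ^ k * C < e"
proof -
  show ?thesis
  proof (cases "C \<le> 0")
    case True
    show ?thesis
    proof (intro exI allI impI)
      fix k :: nat
      have "v pi ^ k \<ge> 0" using pi_pos by simp
      hence "v pi ^ k * C \<le> 0" using True by (simp add: mult_nonneg_nonpos)
      thus "v pi ^ k * C < e" using epos by linarith
    qed
  next
    case False
    hence Cp: "C > 0" by simp
    obtain n where n: "v pi ^ n < e / C" using pow_small[OF divide_pos_pos[OF epos Cp]] by blast
    show ?thesis
    proof (intro exI allI impI)
      fix k assume "k \<ge> n"
      hence "v pi ^ k < e / C" using pow_decr n by (meson order_le_less_trans)
      thus "v pi ^ k * C < e" using Cp by (simp add: field_simps)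
    qed
  qed
qed

lemma span_pow:
  assumes ac: "abs_convex v sc A" and x: "x \<in> span A"
  shows "\<exists>k0. \<forall>k\<ge>k0. sc (pi ^ k) x \<in> A"
  using x
proof (induct rule: span_induct_alt)
  case base thus ?case using ac_zero[OF ac] by simp
next
  case (step c x0 z)
  then obtain k1 where k1: "\<forall>k\<ge>k1. sc (pi ^ k) z \<in> A" by blast
  obtain n where n: "\<forall>k\<ge>n. v pi ^ k * v c < 1" using pow_scal_small[of 1 "v c"] by auto
  show ?case
  proof (intro exI allI impI)
    fix k assume k: "k \<ge> max n k1"
    have "sc (pi ^ k) (sc c x0 + z) = sc (pi ^ k * c) x0 + sc (pi ^ k) z"
      by (simp add: scale_right_distrib)
    moreover have "sc (pi ^ k * c) x0 \<in> A"
      using n k step(1) by (intro ac_sc[OF ac]) (auto simp: v_mult v_pow less_imp_le)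
    ultimately show "sc (pi ^ k) (sc c x0 + z) \<in> A" using k1 k ac_add[OF ac] by auto
  qed
qed

lemma indep_exists:
  assumes H: "subspace H" and inf: "\<And>S. finite S \<Longrightarrow> \<not> H \<subseteq> span S"
  shows "\<exists>Hs. Hs \<subseteq> H \<and> finite Hs \<and> independent Hs \<and> card Hs = n"
proof (induct n)
  case 0 show ?case by (rule exI[of _ "{}"]) (simp add: independent_empty)
next
  case (Suc n)
  then obtain Hs where Hs: "Hs \<subseteq> H" "finite Hs" "independent Hs" "card Hs = n" by blast
  obtain h where h: "h \<in> H" "h \<notin> span Hs" using inf[OF Hs(2)] by blast
  have "h \<notin> Hs" using h(2) span_base by blast
  show ?case
    by (rule exI[of _ "insert h Hs"])
       (use Hs h \<open>h \<notin> Hs\<close> independent_insert[of h Hs] in auto)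
qed

lemma dep_lemma:
  assumes I: "finite I" and T: "finite T" and c: "card T < card I" and \<phi>: "\<And>b. b \<in> I \<Longrightarrow> \<phi> b \<in> span T"
  shows "\<exists>\<alpha>. (\<exists>b\<in>I. \<alpha> b \<noteq> 0) \<and> (\<Sum>b\<in>I. sc (\<alpha> b) (\<phi> b)) = 0"
proof (cases "inj_on \<phi> I")
  case True
  have cardP: "card (\<phi> ` I) = card I" using card_image[OF True] .
  have "\<not> independent (\<phi> ` I)"
  proof
    assume "independent (\<phi> ` I)"
    hence "card (\<phi> ` I) \<le> card T" using independent_span_bound[OF T] \<phi> by blast
    thus False using cardP c by simp
  qed
  then obtain u where u: "\<exists>w\<in>\<phi> ` I. u w \<noteq> 0" "(\<Sum>w\<in>\<phi> ` I. sc (u w) w) = 0"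
    using dependent_finite[of "\<phi> ` I"] I by auto
  show ?thesis
  proof (intro exI conjI)
    show "\<exists>b\<in>I. (u \<circ> \<phi>) b \<noteq> 0" using u(1) by auto
    show "(\<Sum>b\<in>I. sc ((u \<circ> \<phi>) b) (\<phi> b)) = 0"
      using u(2) sum.reindex[OF True, of "\<lambda>w. sc (u w) w"] by simp
  qed
next
  case False
  then obtain b1 b2 where b: "b1 \<in> I" "b2 \<in> I" "b1 \<noteq> b2" "\<phi> b1 = \<phi> b2"
    unfolding inj_on_def by blast
  define \<alpha> where "\<alpha> = (\<lambda>b. if b = b1 then (1::'k) else if b = b2 then -1 else 0)"
  have "(\<Sum>b\<in>I. sc (\<alpha> b) (\<phi> b)) = (\<Sum>b\<in>I. (if b = b1 then \<phi> b else 0) - (if b = b2 then \<phi> b else 0))"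
    using b(3) by (intro sum.cong) (auto simp: \<alpha>_def)
  also have "\<dots> = \<phi> b1 - \<phi> b2" using I b(1,2) by (simp add: sum_subtractf)
  also have "\<dots> = 0" using b(4) by simp
  finally show ?thesis using b(1) by (intro exI[of _ \<alpha>]) (auto simp: \<alpha>_def)
qed

lemma far_elem:
  assumes H: "subspace H" and inf: "\<And>S. finite S \<Longrightarrow> \<not> H \<subseteq> span S" and T: "finite T"
  shows "\<exists>z\<in>H. z \<noteq> 0 \<and> (\<forall>g\<in>span T. v pi * N z \<le> N (z - g))"
proof (rule ccontr)
  assume contra: "\<not> ?thesis"
  define r where "r = v pi"
  have r: "0 < r" "r < 1" unfolding r_def using pi_pos pi_lt1 by auto
  define m where "m = card T"
  obtain Hs where Hs: "Hs \<subseteq> H" "finite Hs" "independent Hs" "card Hs = Suc m"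
    using indep_exists[OF H inf] by blast
  define t where "t = root (Suc m) r"
  have t: "0 < t" "t < 1" unfolding t_def using r
    by (auto simp: real_root_lt_1_iff)
  have t3: "t ^ Suc m = r" unfolding t_def using r by (intro real_root_pow_pos2) auto
  obtain y where y: "orth (t ^ card Hs) Hs y" "\<forall>b\<in>Hs. y b \<in> span Hs"
    using orth_exists[OF t(1,2) Hs(2,3)] by blast
  have o: "orth r Hs y" using y(1) unfolding Hs(4) t3 .
  have yH: "y b \<in> H" if "b \<in> Hs" for b
    using y(2) that span_minimal[OF Hs(1) H] by blast
  have y0: "y b \<noteq> 0" if "b \<in> Hs" for b using o that unfolding orth_def by auto
  have "\<forall>b\<in>Hs. \<exists>g\<in>span T. N (y b - g) < r * N (y b)"
    using contra yH y0 unfolding r_def by (auto simp: not_le)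
  then obtain \<phi> where \<phi>: "\<And>b. b \<in> Hs \<Longrightarrow> \<phi> b \<in> span T" "\<And>b. b \<in> Hs \<Longrightarrow> N (y b - \<phi> b) < r * N (y b)"
    by metis
  have cT: "card T < card Hs" using Hs(4) m_def by simp
  obtain \<alpha> where \<alpha>: "\<exists>b\<in>Hs. \<alpha> b \<noteq> 0" "(\<Sum>b\<in>Hs. sc (\<alpha> b) (\<phi> b)) = 0"
    using dep_lemma[of Hs T \<phi>, OF Hs(2) T cT \<phi>(1)] by blast
  define M where "M = Max ((\<lambda>b. v (\<alpha> b) * N (y b)) ` Hs)"
  have Hne: "Hs \<noteq> {}" using Hs(4) by auto
  have Mge: "v (\<alpha> b) * N (y b) \<le> M" if "b \<in> Hs" for b
    unfolding M_def using Hs(2) that by (intro Max_ge) auto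
  have "M \<in> (\<lambda>b. v (\<alpha> b) * N (y b)) ` Hs" unfolding M_def using Hs(2) Hne by (intro Max_in) auto
  then obtain bs where bs: "bs \<in> Hs" "v (\<alpha> bs) * N (y bs) = M" by auto
  obtain b0 where b0: "b0 \<in> Hs" "\<alpha> b0 \<noteq> 0" using \<alpha>(1) by blast
  have "v (\<alpha> b0) * N (y b0) > 0" using b0 y0 N_pos v_eq0 v_nonneg
    by (metis less_eq_real_def mult_pos_pos)
  hence Mpos: "M > 0" using Mge[OF b0(1)] by simp
  define z where "z = (\<Sum>b\<in>Hs. sc (\<alpha> b) (y b))"
  have "z = (\<Sum>b\<in>Hs. sc (\<alpha> b) (y b)) - (\<Sum>b\<in>Hs. sc (\<alpha> b) (\<phi> b))" using \<alpha>(2) z_def by simp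
  also have "\<dots> = (\<Sum>b\<in>Hs. sc (\<alpha> b) (y b - \<phi> b))"
    by (simp add: sum_subtractf scale_right_diff_distrib)
  finally have z2: "z = (\<Sum>b\<in>Hs. sc (\<alpha> b) (y b - \<phi> b))" .
  have "N z < r * M" unfolding z2
  proof (rule N_sum_less[OF Hs(2)])
    show "0 < r * M" using r Mpos by simp
    fix b assume b: "b \<in> Hs"
    show "N (sc (\<alpha> b) (y b - \<phi> b)) < r * M"
    proof (cases "\<alpha> b = 0")
      case True thus ?thesis using r Mpos by simp
    next
      case False
      hence va: "v (\<alpha> b) > 0" using v_eq0 v_nonneg by (metis less_eq_real_def)
      have "N (sc (\<alpha> b) (y b - \<phi> b)) = v (\<alpha> b) * N (y b - \<phi> b)" by (simp add: N_sc)
      also have "\<dots> < v (\<alpha> b) * (r * N (y b))" using va \<phi>(2)[OF b] by simp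
      also have "\<dots> = r * (v (\<alpha> b) * N (y b))" by simp
      also have "\<dots> \<le> r * M" using Mge[OF b] r by simp
      finally show ?thesis .
    qed
  qed
  moreover have "r * v (\<alpha> bs) * N (y bs) \<le> N z" unfolding z_def by (rule orth_ineq[OF o bs(1)])
  ultimately show False using bs(2) by (simp add: mult.assoc)
qed

end

context navs begin

lemma scale_exists:
  assumes a: "a > 0"
  shows "\<exists>lm. a \<le> v lm \<and> v lm \<le> a / v pi"
proof -
  define r where "r = v pi"
  have r: "0 < r" "r < 1" unfolding r_def using pi_pos pi_lt1 by auto
  show ?thesis
  proof (cases "a \<le> 1")
    case True
    obtain n where n: "r ^ n < a" using pow_small[OF a] unfolding r_def by auto
    obtain k where k: "k \<le> n" "\<forall>i<k. \<not> r ^ i < a" "r ^ k < a"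
      using ex_least_nat_le[of "\<lambda>i. r ^ i < a", OF n] by blast
    have "k \<noteq> 0" using k(3) True by (cases k) auto
    then obtain m where m: "k = Suc m" by (cases k) auto
    have "a \<le> r ^ m" using k(2) m by auto
    moreover have "r ^ m * r < a" using k(3) m by (simp add: mult.commute)
    hence "r ^ m \<le> a / r" using pos_le_divide_eq[OF r(1), of "r ^ m" a] by simp
    ultimately show ?thesis unfolding r_def by (intro exI[of _ "pi ^ m"]) (simp add: v_pow)
  next
    case False
    define b where "b = inverse a"
    have b: "0 < b" "b < 1" using False a unfolding b_def by (auto simp: inverse_less_1_iff)
    obtain n where n: "r ^ n < b" using pow_small[OF b(1)] unfolding r_def by auto
    obtain k where k: "k \<le> n" "\<forall>i<k. \<not> r ^ i < b" "r ^ k < b"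
      using ex_least_nat_le[of "\<lambda>i. r ^ i < b", OF n] by blast
    have "k \<noteq> 0" using k(3) b by (cases k) auto
    then obtain m where m: "k = Suc m" by (cases k) auto
    have rk: "r ^ k > 0" using r by simp
    have "inverse (inverse a) < inverse (r ^ k)"
      using less_imp_inverse_less[OF k(3) rk] unfolding b_def .
    hence l1: "a \<le> inverse (r ^ k)" by simp
    have "b \<le> r ^ m" using k(2) m by auto
    moreover have "r ^ m = r ^ k / r" using m r by simp
    ultimately have "b \<le> r ^ k / r" by simp
    hence "inverse (r ^ k / r) \<le> inverse b" using le_imp_inverse_le[of b "r ^ k / r"] b by simp
    hence "r / r ^ k \<le> a" unfolding b_def by simp
    hence "r / r ^ k / r \<le> a / r" using r by (intro divide_right_mono) auto
    moreover have "r / r ^ k / r = inverse (r ^ k)" using r by (simp add: inverse_eq_divide)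
    ultimately have "inverse (r ^ k) \<le> a / r" by simp
    thus ?thesis using l1 unfolding r_def
      by (intro exI[of _ "inverse (pi ^ k)"]) (simp add: v_pow v_inverse)
  qed
qed

lemma step_lemma:
  assumes H: "subspace H" and inf: "\<And>S. finite S \<Longrightarrow> \<not> H \<subseteq> span S" and T: "finite T"
    and eta: "\<eta> > 0"
  shows "\<exists>y\<in>H. N y \<le> \<eta> / (v pi)\<^sup>2 \<and> (\<forall>g\<in>span T. \<eta> \<le> N (y - g))"
proof -
  define r where "r = v pi"
  have r: "0 < r" "r < 1" unfolding r_def using pi_pos pi_lt1 by auto
  obtain z where z: "z \<in> H" "z \<noteq> 0" "\<And>g. g \<in> span T \<Longrightarrow> r * N z \<le> N (z - g)"
    using far_elem[OF H inf T] unfolding r_def by blast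
  have Nz: "N z > 0" using N_pos z(2) by simp
  define a where "a = \<eta> / (r * N z)"
  have apos: "a > 0" unfolding a_def using eta r Nz by simp
  obtain lm where lm: "a \<le> v lm" "v lm \<le> a / r" using scale_exists[OF apos] unfolding r_def by blast
  have l0: "lm \<noteq> 0" using lm(1) apos by auto
  show ?thesis
  proof (intro bexI conjI ballI)
    show "sc lm z \<in> H" using z(1) H by (simp add: subspace_def)
    have "N (sc lm z) = v lm * N z" by (simp add: N_sc)
    also have "\<dots> \<le> a / r * N z" using mult_right_mono[OF lm(2), of "N z"] Nz by simp
    also have "\<dots> = \<eta> / r\<^sup>2" unfolding a_def using r Nz by (simp add: field_simps power2_eq_square)
    finally show "N (sc lm z) \<le> \<eta> / (v pi)\<^sup>2" unfolding r_def .
    fix g assume g: "g \<in> span T"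
    have "sc lm z - g = sc lm (z - sc (inverse lm) g)" using l0 by (simp add: scale_right_diff_distrib)
    hence "N (sc lm z - g) = v lm * N (z - sc (inverse lm) g)" by (simp add: N_sc)
    also have "\<dots> \<ge> v lm * (r * N z)"
      using z(3)[OF span_scale[OF g]] v_nonneg[of lm] by (simp add: mult_left_mono)
    moreover have "v lm * (r * N z) \<ge> a * (r * N z)" using lm(1) r Nz by simp
    moreover have "a * (r * N z) = \<eta>" unfolding a_def using r Nz by simp
    ultimately show "\<eta> \<le> N (sc lm z - g)" by linarith
  qed
qed

end

context navs begin

lemma findim:
  assumes ac: "abs_convex v sc A"
    and lc: "\<forall>U. zero_nhd N U \<longrightarrow> (\<exists>S. finite S \<and> A \<subseteq> msum U (span S))"
    and cw: "complete_wrt N (span A)"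
  shows "\<exists>S. finite S \<and> span A \<subseteq> span S"
proof (rule ccontr)
  assume "\<not> ?thesis"
  hence inf: "\<And>S. finite S \<Longrightarrow> \<not> span A \<subseteq> span S" by blast
  define H where "H = span A"
  have Hs: "subspace H" by (simp add: H_def)
  have infH: "\<And>S. finite S \<Longrightarrow> \<not> H \<subseteq> span S" using inf unfolding H_def .
  define r where "r = v pi"
  have r: "0 < r" "r < 1" unfolding r_def using pi_pos pi_lt1 by auto
  define \<eta> where "\<eta> k = r ^ (3 * k)" for k
  define \<epsilon> where "\<epsilon> k = r ^ k * \<eta> k" for k
  have \<eta>pos: "\<eta> k > 0" for k unfolding \<eta>_def using r by simp
  have \<epsilon>pos: "\<epsilon> k > 0" for k unfolding \<epsilon>_def using r \<eta>pos by simp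
  have "\<forall>k. \<exists>S. finite S \<and> A \<subseteq> msum {x. N x < \<epsilon> k} (span S)"
  proof
    fix k
    have "zero_nhd N {x. N x < \<epsilon> k}" unfolding zero_nhd_def using \<epsilon>pos by blast
    thus "\<exists>S. finite S \<and> A \<subseteq> msum {x. N x < \<epsilon> k} (span S)" using lc by blast
  qed
  then obtain S where S: "\<And>k. finite (S k)" "\<And>k. A \<subseteq> msum {x. N x < \<epsilon> k} (span (S k))"
    by metis
  define P where "P k p \<longleftrightarrow> finite (fst p) \<and> S k \<subseteq> fst p \<and> snd p \<in> H \<and> N (snd p) \<le> \<eta> k / r\<^sup>2 \<and>
      (\<forall>g\<in>span (fst p). \<eta> k \<le> N (snd p - g))" for k p
  define Q where "Q k p p' \<longleftrightarrow> insert (snd p) (fst p) \<subseteq> fst p'" for k :: nat and p p' :: "'e set \<times> 'e"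
  have P0: "\<exists>p. P 0 p"
  proof -
    obtain y where "y \<in> H" "N y \<le> \<eta> 0 / r\<^sup>2" "\<forall>g\<in>span (S 0). \<eta> 0 \<le> N (y - g)"
      using step_lemma[OF Hs infH S(1) \<eta>pos] unfolding r_def by blast
    thus ?thesis unfolding P_def using S(1)[of 0] by (intro exI[of _ "(S 0, y)"]) auto
  qed
  have Pstep: "\<exists>p'. P (Suc n) p' \<and> Q n p p'" if "P n p" for p n
  proof -
    define T' where "T' = insert (snd p) (fst p) \<union> S (Suc n)"
    have fT': "finite T'" using that S(1) unfolding T'_def P_def by auto
    obtain y where "y \<in> H" "N y \<le> \<eta> (Suc n) / r\<^sup>2" "\<forall>g\<in>span T'. \<eta> (Suc n) \<le> N (y - g)"
      using step_lemma[OF Hs infH fT' \<eta>pos] unfolding r_def by blast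
    thus ?thesis unfolding P_def Q_def using fT' by (intro exI[of _ "(T', y)"]) (auto simp: T'_def)
  qed
  obtain f where f: "\<And>n. P n (f n) \<and> Q n (f n) (f (Suc n))"
    using dependent_nat_choice[of P Q, OF P0 Pstep] by blast
  define T where "T k = fst (f k)" for k
  define y where "y k = snd (f k)" for k
  have Tfin: "finite (T k)" and ST: "S k \<subseteq> T k" and yH: "y k \<in> H"
    and yN: "N (y k) \<le> \<eta> k / r\<^sup>2" and yfar: "\<And>g. g \<in> span (T k) \<Longrightarrow> \<eta> k \<le> N (y k - g)"
    and TS: "insert (y k) (T k) \<subseteq> T (Suc k)" for k
    using f[of k] unfolding P_def Q_def T_def y_def by auto
  have Tmono: "T j \<subseteq> T k" if "j \<le> k" for j k
    using lift_Suc_mono_le[of T, OF _ that] TS by blast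
  have yin: "y j \<in> T k" if "j < k" for j k
    using TS[of j] Tmono[of "Suc j" k] that by auto
  define s where "s n = (\<Sum>j\<in>{0..<n}. y j)" for n
  have sH: "s n \<in> H" for n unfolding s_def H_def using yH unfolding H_def by (intro span_sum) auto
  have sT: "s k \<in> span (T k)" for k unfolding s_def using yin by (intro span_sum span_base) auto
  have \<eta>dec: "\<eta> n \<le> \<eta> m" if "m \<le> n" for m n
    unfolding \<eta>_def using r that by (intro power_decreasing) auto
  have diffb: "N (s n - s m) \<le> \<eta> m / r\<^sup>2" if "m \<le> n" for m n
  proof -
    have "s n - s m = (\<Sum>j\<in>{m..<n}. y j)" unfolding s_def using sum_diff_nat_ivl[of 0 m n y] that by simp
    also have "N \<dots> \<le> \<eta> m / r\<^sup>2"
    proof (rule N_sum_le)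
      show "0 \<le> \<eta> m / r\<^sup>2" using \<eta>pos[of m] by simp
      fix j assume "j \<in> {m..<n}"
      hence "\<eta> j \<le> \<eta> m" using \<eta>dec by simp
      hence "\<eta> j / r\<^sup>2 \<le> \<eta> m / r\<^sup>2" by (simp add: divide_right_mono)
      thus "N (y j) \<le> \<eta> m / r\<^sup>2" using yN[of j] by linarith
    qed simp
    finally show ?thesis .
  qed
  have cau: "\<exists>M. \<forall>m\<ge>M. \<forall>n\<ge>M. N (s m - s n) < e" if e: "e > 0" for e
  proof -
    obtain M where M: "\<forall>k\<ge>M. v pi ^ k * (1 / r\<^sup>2) < e" using pow_scal_small[OF e] by blast
    have small: "\<eta> m / r\<^sup>2 < e" if "m \<ge> M" for m
    proof -
      have "3 * m \<ge> M" using that by simp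
      hence "r ^ (3 * m) * (1 / r\<^sup>2) < e" using M unfolding r_def by blast
      thus ?thesis unfolding \<eta>_def by simp
    qed
    show ?thesis
    proof (intro exI allI impI)
      fix m n assume mn: "m \<ge> M" "n \<ge> M"
      show "N (s m - s n) < e"
      proof (cases "m \<le> n")
        case True
        thus ?thesis using diffb[OF True] small[OF mn(1)] N_commute[of "s m" "s n"] by linarith
      next
        case False
        thus ?thesis using diffb[of n m] small[OF mn(2)] by linarith
      qed
    qed
  qed
  obtain x where x: "x \<in> H" "\<And>e. e > 0 \<Longrightarrow> \<exists>M. \<forall>n\<ge>M. N (s n - x) < e"
    using cw[unfolded complete_wrt_def, rule_format, of s] sH cau unfolding H_def by blast
  have tail: "N (x - s (Suc k)) \<le> \<eta> (Suc k) / r\<^sup>2" for k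
  proof -
    have e: "\<eta> (Suc k) / r\<^sup>2 > 0" using \<eta>pos r by simp
    obtain M where M: "\<forall>n\<ge>M. N (s n - x) < \<eta> (Suc k) / r\<^sup>2" using x(2)[OF e] by blast
    define n where "n = max M (Suc k)"
    have "n \<ge> M" unfolding n_def by simp
    hence "N (s n - x) < \<eta> (Suc k) / r\<^sup>2" using M by blast
    hence a1: "N (x - s n) \<le> \<eta> (Suc k) / r\<^sup>2" using N_commute[of x "s n"] by simp
    have a2: "N (s n - s (Suc k)) \<le> \<eta> (Suc k) / r\<^sup>2" using diffb[of "Suc k" n] unfolding n_def by simp
    have "N (x - s (Suc k)) \<le> max (N (x - s n)) (N (s n - s (Suc k)))" by (rule N_diff_tri)
    thus ?thesis using a1 a2 by simp
  qed
  obtain k where k: "sc (pi ^ k) x \<in> A" using span_pow[OF ac, of x] x(1) unfolding H_def by blast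
  obtain u fv where ufv: "sc (pi ^ k) x = u + fv" "N u < \<epsilon> k" "fv \<in> span (S k)"
    using S(2)[of k] k unfolding msum_def by blast
  define g where "g = sc (inverse (pi ^ k)) fv"
  have pk: "pi ^ k \<noteq> 0" using pi_ne0 by simp
  have gT: "g \<in> span (T k)" unfolding g_def using ufv(3) span_mono[OF ST[of k]] by (intro span_scale) auto
  have "x = sc (inverse (pi ^ k)) (sc (pi ^ k) x)" using pk by simp
  also have "\<dots> = sc (inverse (pi ^ k)) u + g" unfolding ufv(1) g_def by (simp add: scale_right_distrib)
  finally have xg: "x - g = sc (inverse (pi ^ k)) u" by simp
  have rk: "r ^ k > 0" using r by simp
  have "N (x - g) = inverse (r ^ k) * N u" unfolding xg by (simp add: N_sc v_inverse v_pow r_def)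
  also have "\<dots> < inverse (r ^ k) * \<epsilon> k" using ufv(2) rk by simp
  also have "\<dots> = \<eta> k"
  proof -
    have "r ^ k \<noteq> 0" using rk by linarith
    hence "inverse (r ^ k) * r ^ k = 1" by simp
    thus ?thesis unfolding \<epsilon>_def by (simp add: mult.assoc[symmetric])
  qed
  finally have lt: "N (x - g) < \<eta> k" .
  have sS: "s (Suc k) = s k + y k" unfolding s_def by simp
  have split: "x - g = (y k - (g - s k)) + (x - s (Suc k))" unfolding sS by simp
  have far: "\<eta> k \<le> N (y k - (g - s k))" using yfar[of "g - s k"] gT sT[of k] span_diff by blast
  have e3: "\<eta> (Suc k) = r ^ 3 * \<eta> k" unfolding \<eta>_def by (simp add: mult_Suc_right power_add)
  have "\<eta> (Suc k) / r\<^sup>2 = (\<eta> k * r) * r\<^sup>2 / r\<^sup>2" unfolding e3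
    by (simp add: power2_eq_square power3_eq_cube mult_ac)
  also have "\<dots> = \<eta> k * r" using r by simp
  finally have "\<eta> (Suc k) / r\<^sup>2 = \<eta> k * r" .
  hence "\<eta> (Suc k) / r\<^sup>2 < \<eta> k" using \<eta>pos[of k] r by (simp add: mult_less_cancel_left1)
  hence "N (x - s (Suc k)) < N (y k - (g - s k))" using tail[of k] far by linarith
  hence "N (y k - (g - s k)) \<le> N (x - g)" unfolding split by (rule N_ge_of_strict)
  thus False using lt far by linarith
qed

end

context navs begin

definition Dl :: "'e set \<Rightarrow> 'e set" where "Dl X = {d. \<forall>c. sc c d \<in> X}"

lemma Dl_in: "a \<in> Dl X \<Longrightarrow> sc c a \<in> X" unfolding Dl_def by simp
lemma Dl_I: "(\<And>c. sc c a \<in> X) \<Longrightarrow> a \<in> Dl X" unfolding Dl_def by simp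
lemma Dl_sub: "Dl X \<subseteq> X"
proof
  fix a assume "a \<in> Dl X" thus "a \<in> X" using Dl_in[of a X 1] by simp
qed
lemma Dl_mono: "X \<subseteq> Y \<Longrightarrow> Dl X \<subseteq> Dl Y" unfolding Dl_def by blast
lemma Dl_zero: "abs_convex v sc X \<Longrightarrow> 0 \<in> Dl X"
  by (rule Dl_I) (simp add: ac_zero)
lemma Dl_add: assumes "abs_convex v sc X" "a \<in> Dl X" "b \<in> Dl X" shows "a + b \<in> Dl X"
proof (rule Dl_I)
  fix c
  have "sc c (a + b) = sc c a + sc c b" by (rule scale_right_distrib)
  thus "sc c (a + b) \<in> X" using ac_add[OF assms(1) Dl_in[OF assms(2)] Dl_in[OF assms(3)]] by simp
qed
lemma Dl_sc: assumes "a \<in> Dl X" shows "sc c a \<in> Dl X"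
proof (rule Dl_I)
  fix c' show "sc c' (sc c a) \<in> X" using Dl_in[OF assms, of "c' * c"] by simp
qed
lemma Dl_subspace: "abs_convex v sc X \<Longrightarrow> subspace (Dl X)"
  unfolding subspace_def using Dl_zero Dl_add Dl_sc by blast
lemma Dl_neg: "a \<in> Dl X \<Longrightarrow> - a \<in> Dl X" using Dl_sc[of a X "-1"] by simp
lemma Dl_sum: assumes "abs_convex v sc X" shows "(\<And>i. i \<in> I \<Longrightarrow> f i \<in> Dl X) \<Longrightarrow> sum f I \<in> Dl X"
proof (induct I rule: infinite_finite_induct)
  case (infinite I) thus ?case using Dl_zero[OF assms] by simp
next
  case empty thus ?case using Dl_zero[OF assms] by simp
next
  case (insert x F)
  have "f x \<in> Dl X" "sum f F \<in> Dl X" using insert by auto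
  thus ?case using Dl_add[OF assms] insert(1,2) by simp
qed

lemma tele_bound:
  fixes u :: "nat \<Rightarrow> 'e"
  assumes step: "\<And>j. N (u (Suc j) - u j) \<le> v pi ^ j * R" and R: "R \<ge> 0" and mn: "m \<le> n"
  shows "N (u n - u m) \<le> v pi ^ m * R"
  using mn
proof (induct n rule: dec_induct)
  case base thus ?case using R pi_pos by simp
next
  case (step n)
  have "N (u (Suc n) - u m) \<le> max (N (u (Suc n) - u n)) (N (u n - u m))" by (rule N_diff_tri)
  moreover have "v pi ^ n * R \<le> v pi ^ m * R" using pow_decr[OF step(1)] R by (simp add: mult_right_mono)
  ultimately show ?case using step(3) assms(1)[of n] by simp
qed

lemma lim_tail:
  fixes u :: "nat \<Rightarrow> 'e"
  assumes lim: "\<And>e. e > 0 \<Longrightarrow> \<exists>M. \<forall>n\<ge>M. N (u n - z) < e"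
    and b: "\<And>n. n \<ge> m \<Longrightarrow> N (u n - u m) \<le> B" and B: "B \<ge> 0"
  shows "N (z - u m) \<le> B"
proof (rule ccontr)
  assume "\<not> ?thesis"
  hence gt: "N (z - u m) > B" by simp
  define e where "e = (N (z - u m) - B) / 2"
  have e: "e > 0" using gt unfolding e_def by simp
  obtain M where M: "\<forall>n\<ge>M. N (u n - z) < e" using lim[OF e] by blast
  define n where "n = max M m"
  have "n \<ge> M" unfolding n_def by simp
  hence a1: "N (z - u n) < e" using M N_commute[of z "u n"] by simp
  have a2: "N (u n - u m) \<le> B" using b unfolding n_def by simp
  have "N (z - u m) \<le> max (N (z - u n)) (N (u n - u m))" by (rule N_diff_tri)
  hence "N (z - u m) \<le> max e B" using a1 a2 by simp
  moreover have "max e B \<le> e + B" using e B by simp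
  ultimately have "N (z - u m) \<le> e + B" by linarith
  moreover have "2 * e = N (z - u m) - B" unfolding e_def by simp
  ultimately show False using gt by linarith
qed

lemma coord_notin:
  assumes fin: "finite J'" and o: "orth \<tau> (insert e J') y" and e: "e \<notin> J'"
  shows "y e \<notin> span (y ` J')"
proof
  assume "y e \<in> span (y ` J')"
  then obtain \<beta> where \<beta>: "y e = (\<Sum>c\<in>J'. sc (\<beta> c) (y c))" using span_image_rep[OF fin] by blast
  define \<alpha> where "\<alpha> = (\<lambda>c. if c = e then 1 else - \<beta> c)"
  have "(\<Sum>c\<in>insert e J'. sc (\<alpha> c) (y c)) = sc (\<alpha> e) (y e) + (\<Sum>c\<in>J'. sc (\<alpha> c) (y c))"
    using fin e by simp
  also have "(\<Sum>c\<in>J'. sc (\<alpha> c) (y c)) = - (\<Sum>c\<in>J'. sc (\<beta> c) (y c))"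
    using e by (auto simp: \<alpha>_def sum_negf[symmetric] intro!: sum.cong)
  also have "sc (\<alpha> e) (y e) = y e" by (simp add: \<alpha>_def)
  finally have s0: "(\<Sum>c\<in>insert e J'. sc (\<alpha> c) (y c)) = 0" using \<beta> by simp
  have "\<tau> * v (\<alpha> e) * N (y e) \<le> N (\<Sum>c\<in>insert e J'. sc (\<alpha> c) (y c))"
    by (rule orth_ineq[OF o]) simp
  hence le: "\<tau> * N (y e) \<le> 0" unfolding s0 by (simp add: \<alpha>_def)
  have "\<tau> > 0" "N (y e) > 0" using o N_pos unfolding orth_def by auto
  thus False using le mult_pos_pos[of \<tau> "N (y e)"] by linarith
qed

end

context navs begin

lemma ac_inter_subspace: "abs_convex v sc X \<Longrightarrow> subspace W \<Longrightarrow> abs_convex v sc (X \<inter> W)"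
  unfolding abs_convex_def subspace_def by auto

lemma KL:
  assumes fin: "finite J" and o: "orth \<tau> J y"
  shows "abs_convex v sc X \<Longrightarrow> X \<subseteq> span (y ` J) \<Longrightarrow> \<delta> > 0 \<Longrightarrow>
    (\<And>x. x \<in> span (y ` J) \<Longrightarrow> N x < \<delta> \<Longrightarrow> x \<in> X) \<Longrightarrow> \<exists>R. \<forall>x\<in>X. \<exists>d\<in>Dl X. N (x - d) \<le> R"
  using fin o
proof (induct J arbitrary: X rule: finite_induct)
  case empty
  show ?case
  proof (intro exI ballI bexI)
    fix x assume "x \<in> X"
    hence "x = 0" using empty.prems by auto
    thus "N (x - 0) \<le> 0" by simp
    have "abs_convex v sc X" using empty.prems by auto
    thus "0 \<in> Dl X" using Dl_zero by blast
  qed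
next
  case (insert e J')
  have oJ: "orth \<tau> (insert e J') y" and ac: "abs_convex v sc X" and XV: "X \<subseteq> span (y ` insert e J')"
    and \<delta>: "\<delta> > 0" and ball: "\<And>x. x \<in> span (y ` insert e J') \<Longrightarrow> N x < \<delta> \<Longrightarrow> x \<in> X"
    using insert.prems by auto
  have finJ': "finite J'" using insert.hyps(1) .
  have oJ': "orth \<tau> J' y" using orth_subset[OF oJ _ ] insert.hyps(1) by auto
  define W where "W = span (y ` J')"
  define V where "V = span (y ` insert e J')"
  define ye where "ye = y e"
  have yeW: "ye \<notin> W" unfolding ye_def W_def by (rule coord_notin[OF finJ' oJ insert.hyps(2)])
  have VW: "V = {x. \<exists>c. x - sc c ye \<in> W}" unfolding V_def W_def ye_def
    using span_insert[of "y e" "y ` J'"] by simp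
  have WV: "W \<subseteq> V" unfolding W_def V_def by (rule span_mono) auto
  have subW: "subspace W" unfolding W_def by simp
  have subV: "subspace V" unfolding V_def by simp
  have r: "0 < v pi" "v pi < 1" using pi_pos pi_lt1 by auto
  have cuniq: "c1 = c2" if "x - sc c1 ye \<in> W" "x - sc c2 ye \<in> W" for x c1 c2
  proof (rule ccontr)
    assume ne: "c1 \<noteq> c2"
    have "(x - sc c2 ye) - (x - sc c1 ye) \<in> W" by (rule subspace_diff[OF subW that(2) that(1)])
    moreover have "(x - sc c2 ye) - (x - sc c1 ye) = sc (c1 - c2) ye" by (simp add: scale_left_diff_distrib)
    ultimately have "sc (c1 - c2) ye \<in> W" by simp
    hence "sc (inverse (c1 - c2)) (sc (c1 - c2) ye) \<in> W" by (rule subspace_scale[OF subW])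
    hence "ye \<in> W" using ne by simp
    thus False using yeW by simp
  qed
  define k where "k x = (THE c. x - sc c ye \<in> W)" for x
  have kU: "k x = c" if "x - sc c ye \<in> W" for x c
    unfolding k_def using that cuniq by blast
  have kP: "x - sc (k x) ye \<in> W" if xV: "x \<in> V" for x
  proof -
    obtain c where "x - sc c ye \<in> W" using xV VW by auto
    thus ?thesis using kU by simp
  qed
  have kW: "k w = 0" if "w \<in> W" for w using kU[of w 0] that by simp
  have kye: "k ye = 1" using kU[of ye 1] subW by (simp add: subspace_0)
  have k_add: "k (a + b) = k a + k b" if "a \<in> V" "b \<in> V" for a b
  proof (rule kU)
    have eq: "(a + b) - sc (k a + k b) ye = (a - sc (k a) ye) + (b - sc (k b) ye)"
      by (simp add: scale_left_distrib algebra_simps)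
    show "(a + b) - sc (k a + k b) ye \<in> W" unfolding eq
      by (rule subspace_add[OF subW kP[OF that(1)] kP[OF that(2)]])
  qed
  have k_sc: "k (sc c a) = c * k a" if "a \<in> V" for a c
  proof (rule kU)
    have eq: "sc c a - sc (c * k a) ye = sc c (a - sc (k a) ye)" by (simp add: scale_right_diff_distrib)
    show "sc c a - sc (c * k a) ye \<in> W" unfolding eq by (rule subspace_scale[OF subW kP[OF that]])
  qed
  have k_diff: "k (a - b) = k a - k b" if "a \<in> V" "b \<in> V" for a b
  proof -
    have "- b \<in> V" by (rule subspace_neg[OF subV that(2)])
    hence "k (a + - b) = k a + k (- b)" using k_add that by blast
    moreover have "k (- b) = - k b" using k_sc[OF that(2), of "-1"] by simp
    ultimately show ?thesis by simp
  qed
  define X' where "X' = X \<inter> W"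
  have acX': "abs_convex v sc X'" unfolding X'_def by (rule ac_inter_subspace[OF ac subW])
  have X'W: "X' \<subseteq> span (y ` J')" unfolding X'_def W_def by auto
  have ballW: "\<And>x. x \<in> span (y ` J') \<Longrightarrow> N x < \<delta> \<Longrightarrow> x \<in> X'"
    using ball WV unfolding X'_def W_def V_def by auto
  obtain R' where R': "\<And>x. x \<in> X' \<Longrightarrow> \<exists>d\<in>Dl X'. N (x - d) \<le> R'"
    using insert.hyps(3)[OF acX' X'W \<delta> ballW oJ'] by blast
  have R'nn: "R' \<ge> 0"
  proof -
    obtain d where "d \<in> Dl X'" "N (0 - d) \<le> R'" using R'[of 0] ac_zero[OF acX'] by blast
    thus ?thesis using N_nonneg[of "0 - d"] by linarith
  qed
  have DlXX: "Dl X' \<subseteq> Dl X" unfolding X'_def by (rule Dl_mono) auto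
  have xX': "x \<in> X'" if "x \<in> X" "k x = 0" for x
    using kP[of x] that XV unfolding X'_def V_def by auto
  have XinV: "x \<in> V" if "x \<in> X" for x using that XV unfolding V_def by auto
  show ?case
  proof (cases "\<exists>M. \<forall>x\<in>X. v (k x) \<le> M")
    case True
    then obtain M where M: "\<And>x. x \<in> X \<Longrightarrow> v (k x) \<le> M" by blast
    show ?thesis
    proof (cases "\<forall>x\<in>X. k x = 0")
      case True
      show ?thesis
      proof (intro exI ballI)
        fix x assume x: "x \<in> X"
        obtain d where "d \<in> Dl X'" "N (x - d) \<le> R'" using R'[OF xX'[OF x]] True x by blast
        thus "\<exists>d\<in>Dl X. N (x - d) \<le> R'" using DlXX by blast
      qed
    next
      case False
      then obtain x1 where x1: "x1 \<in> X" "k x1 \<noteq> 0" by blast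
      define K where "K = (\<lambda>x. v (k x)) ` X"
      have Kbdd: "bdd_above K" unfolding K_def using M by (intro bdd_aboveI[of _ M]) auto
      define Sk where "Sk = Sup K"
      have Sku: "v (k x) \<le> Sk" if "x \<in> X" for x
        unfolding Sk_def using that by (intro cSup_upper[OF _ Kbdd]) (auto simp: K_def)
      have "v (k x1) > 0" using x1 v_eq0 v_nonneg by (metis less_eq_real_def)
      hence Skp: "Sk > 0" using Sku[OF x1(1)] by simp
      have "v pi * Sk < Sk" using Skp r by simp
      then obtain xs where xs: "xs \<in> X" "v pi * Sk < v (k xs)"
        using less_cSupE[of "v pi * Sk" K] K_def Sk_def x1(1) by blast
      have vks: "v (k xs) > 0" using xs(2) Skp r by (smt (verit) mult_pos_pos)
      hence kxs: "k xs \<noteq> 0" by auto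
      define R where "R = max (inverse (v pi) * R') (inverse (v pi) * N xs)"
      show ?thesis
      proof (intro exI ballI)
        fix x assume x: "x \<in> X"
        define lam where "lam = k x / k xs"
        have vlam: "v (pi * lam) < 1"
        proof -
          have "v (pi * lam) = v pi * v (k x) / v (k xs)" unfolding lam_def by (simp add: v_mult v_divide)
          also have "\<dots> \<le> v pi * Sk / v (k xs)"
            using Sku[OF x] r vks by (intro divide_right_mono mult_left_mono) auto
          also have "\<dots> < 1" using xs(2) vks by simp
          finally show ?thesis .
        qed
        define x1' where "x1' = sc pi x - sc (pi * lam) xs"
        have x1X: "x1' \<in> X" unfolding x1'_def
          using ac_diff[OF ac ac_sc[OF ac _ x] ac_sc[OF ac _ xs(1)]] r vlam by simp
        have s1: "sc pi x \<in> V" by (rule subspace_scale[OF subV XinV[OF x]])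
        have s2: "sc (pi * lam) xs \<in> V" by (rule subspace_scale[OF subV XinV[OF xs(1)]])
        have "k x1' = k (sc pi x) - k (sc (pi * lam) xs)" unfolding x1'_def by (rule k_diff[OF s1 s2])
        also have "\<dots> = pi * k x - (pi * lam) * k xs"
          using k_sc[OF XinV[OF x]] k_sc[OF XinV[OF xs(1)]] by simp
        also have "\<dots> = 0" unfolding lam_def using kxs by simp
        finally have "x1' \<in> X'" using xX' x1X by blast
        then obtain d' where d': "d' \<in> Dl X'" "N (x1' - d') \<le> R'" using R' by blast
        define d where "d = sc (inverse pi) d'"
        have dD: "d \<in> Dl X" unfolding d_def using Dl_sc d'(1) DlXX by blast
        have eq: "x - d = sc (inverse pi) (x1' - d') + sc lam xs"
          unfolding x1'_def d_def using pi_ne0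
          by (simp add: scale_right_diff_distrib algebra_simps)
        have n1: "N (sc (inverse pi) (x1' - d')) \<le> inverse (v pi) * R'"
          using d'(2) r by (simp add: N_sc v_inverse)
        have "v lam = v (pi * lam) / v pi" using r by (simp add: v_mult)
        hence "v lam \<le> inverse (v pi)" using vlam r by (simp add: divide_inverse)
        hence n2: "N (sc lam xs) \<le> inverse (v pi) * N xs"
          using N_nonneg[of xs] by (simp add: N_sc mult_right_mono)
        have "N (x - d) \<le> max (N (sc (inverse pi) (x1' - d'))) (N (sc lam xs))"
          unfolding eq by (rule N_ultra)
        also have "\<dots> \<le> R" unfolding R_def by (rule max.mono[OF n1 n2])
        finally show "\<exists>d\<in>Dl X. N (x - d) \<le> R" using dD by blast
      qed
    qed
  next
    case False
    hence unb: "\<And>M. \<exists>x\<in>X. M < v (k x)" by (auto simp: not_le)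
    have lift: "\<exists>x\<in>X. k x = \<mu>" for \<mu>
    proof -
      obtain x0 where x0: "x0 \<in> X" "v \<mu> < v (k x0)" using unb by blast
      have k0: "k x0 \<noteq> 0" using x0(2) v_nonneg[of \<mu>] by auto
      have "v (\<mu> / k x0) \<le> 1" using x0(2) v_nonneg[of \<mu>] by (simp add: v_divide)
      hence "sc (\<mu> / k x0) x0 \<in> X" using ac_sc[OF ac _ x0(1)] by simp
      moreover have "k (sc (\<mu> / k x0) x0) = \<mu>" using k_sc[OF XinV[OF x0(1)]] k0 by simp
      ultimately show ?thesis by blast
    qed
    define ip where "ip = inverse pi"
    have ipp: "pi * ip = 1" unfolding ip_def using pi_ne0 by simp
    have "\<forall>j. \<exists>x\<in>X. k x = ip ^ j" using lift by blast
    then obtain Xs where Xs: "\<And>j. Xs j \<in> X" "\<And>j. k (Xs j) = ip ^ j" by metis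
    have pj: "pi ^ n * ip ^ n = 1" for n using ipp by (simp add: power_mult_distrib[symmetric])
    define w where "w j = sc (pi ^ j) (Xs j) - ye" for j
    have wW: "w j \<in> W" for j
    proof -
      have sV: "sc (pi ^ j) (Xs j) \<in> V" by (rule subspace_scale[OF subV XinV[OF Xs(1)]])
      have "k (sc (pi ^ j) (Xs j)) = 1" using k_sc[OF XinV[OF Xs(1)]] Xs(2) pj by simp
      thus ?thesis using kP[OF sV] unfolding w_def by simp
    qed
    define Z where "Z j = sc pi (Xs (Suc j)) - Xs j" for j
    have ZX: "Z j \<in> X" for j unfolding Z_def using ac_diff[OF ac ac_sc[OF ac _ Xs(1)] Xs(1)] r by simp
    have "k (Z j) = pi * ip ^ Suc j - ip ^ j" for j
    proof -
      have s1: "sc pi (Xs (Suc j)) \<in> V" by (rule subspace_scale[OF subV XinV[OF Xs(1)]])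
      have "k (Z j) = k (sc pi (Xs (Suc j))) - k (Xs j)" unfolding Z_def by (rule k_diff[OF s1 XinV[OF Xs(1)]])
      also have "\<dots> = pi * ip ^ Suc j - ip ^ j" using k_sc[OF XinV[OF Xs(1)]] Xs(2) by simp
      finally show ?thesis .
    qed
    hence kZ: "k (Z j) = 0" for j using ipp by (simp add: mult.assoc[symmetric])
    have "\<forall>j. \<exists>d\<in>Dl X'. N (Z j - d) \<le> R'" using R' xX' ZX kZ by blast
    then obtain dd where dd: "\<And>j. dd j \<in> Dl X'" "\<And>j. N (Z j - dd j) \<le> R'" by metis
    have ddW: "dd j \<in> W" for j using dd(1) Dl_sub unfolding X'_def by blast
    define Ds where "Ds j = (\<Sum>i\<in>{0..<j}. sc (pi ^ i) (dd i))" for j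
    have DsW: "Ds j \<in> W" for j unfolding Ds_def using ddW subW by (intro subspace_sum subspace_scale) auto
    have DsD: "Ds j \<in> Dl X" for j unfolding Ds_def
    proof (rule Dl_sum[OF ac])
      fix i show "sc (pi ^ i) (dd i) \<in> Dl X" using Dl_sc[OF subsetD[OF DlXX dd(1)]] .
    qed
    define u where "u j = w j - Ds j" for j
    have uW: "u j \<in> W" for j unfolding u_def by (rule subspace_diff[OF subW wW DsW])
    have grp: "(A - E - (D + F)) - (B - E - D) = (A - B) - (F::'e)" for A B D E F
      by (simp add: algebra_simps)
    have ustep: "u (Suc j) - u j = sc (pi ^ j) (Z j - dd j)" for j
    proof -
      have a: "sc (pi ^ Suc j) (Xs (Suc j)) = sc (pi ^ j) (sc pi (Xs (Suc j)))" by (simp add: mult.commute)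
      have b: "Ds (Suc j) = Ds j + sc (pi ^ j) (dd j)" unfolding Ds_def by simp
      have "u (Suc j) - u j = (sc (pi ^ j) (sc pi (Xs (Suc j))) - sc (pi ^ j) (Xs j)) - sc (pi ^ j) (dd j)"
        unfolding u_def w_def a b by (rule grp)
      also have "\<dots> = sc (pi ^ j) (Z j - dd j)" unfolding Z_def by (simp only: scale_right_diff_distrib)
      finally show ?thesis .
    qed
    have ub: "N (u (Suc j) - u j) \<le> v pi ^ j * R'" for j
      unfolding ustep using dd(2)[of j] r by (simp add: N_sc v_pow mult_left_mono)
    have tele: "N (u n - u m) \<le> v pi ^ m * R'" if "m \<le> n" for m n
      by (rule tele_bound[OF ub R'nn that])
    have cau: "\<exists>M. \<forall>m\<ge>M. \<forall>n\<ge>M. N (u m - u n) < e" if e: "e > 0" for e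
    proof -
      obtain M where M: "\<forall>k\<ge>M. v pi ^ k * R' < e" using pow_scal_small[OF e] by blast
      show ?thesis
      proof (intro exI allI impI)
        fix m n assume mn: "m \<ge> M" "n \<ge> M"
        show "N (u m - u n) < e"
        proof (cases "m \<le> n")
          case True thus ?thesis using tele[OF True] M mn(1) N_commute[of "u m" "u n"] by fastforce
        next
          case False thus ?thesis using tele[of n m] M mn(2) by fastforce
        qed
      qed
    qed
    obtain z where z: "z \<in> W" "\<And>e. e > 0 \<Longrightarrow> \<exists>M. \<forall>n\<ge>M. N (u n - z) < e"
      using orth_complete[OF finJ' oJ' uW[unfolded W_def] cau] unfolding W_def by blast
    have ztail: "N (z - u j) \<le> v pi ^ j * R'" for j
      by (rule lim_tail[OF z(2) tele]) (use R'nn r in auto)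
    define l where "l = ye + z"
    have yeV: "ye \<in> V" unfolding ye_def V_def by (rule span_base) simp
    have lV: "l \<in> V" unfolding l_def by (rule subspace_add[OF subV yeV]) (use WV z(1) in blast)
    have lD: "l \<in> Dl X"
    proof (rule Dl_I)
      fix c
      show "sc c l \<in> X"
      proof (cases "c = 0")
        case True thus ?thesis using ac_zero[OF ac] by simp
      next
        case False
        have vc: "v c > 0" using False v_eq0 v_nonneg by (metis less_eq_real_def)
        obtain j1 where j1: "\<forall>k\<ge>j1. v pi ^ k * v c < 1" using pow_scal_small[of 1 "v c"] by auto
        obtain j2 where j2: "\<forall>k\<ge>j2. v pi ^ k * (v c * R') < \<delta>" using pow_scal_small[OF \<delta>] by blast
        define j where "j = max j1 j2"
        have "v (c * pi ^ j) \<le> 1"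
        proof -
          have "j \<ge> j1" unfolding j_def by simp
          hence "v pi ^ j * v c < 1" using j1 by blast
          thus ?thesis by (simp add: v_mult v_pow mult.commute)
        qed
        hence T1: "sc (c * pi ^ j) (Xs j) \<in> X" using ac_sc[OF ac _ Xs(1)] by simp
        have T2: "sc c (z - u j) \<in> X"
        proof (rule ball)
          have "z - u j \<in> W" by (rule subspace_diff[OF subW z(1) uW])
          hence "z - u j \<in> V" using WV by blast
          thus "sc c (z - u j) \<in> span (y ` insert e J')" unfolding V_def by (rule span_scale)
          have "N (sc c (z - u j)) = v c * N (z - u j)" by (simp add: N_sc)
          also have "\<dots> \<le> v c * (v pi ^ j * R')" using ztail[of j] vc by simp
          also have "\<dots> < \<delta>"
          proof -
            have "j \<ge> j2" unfolding j_def by simp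
            hence "v pi ^ j * (v c * R') < \<delta>" using j2 by blast
            moreover have "v c * (v pi ^ j * R') = v pi ^ j * (v c * R')" by (simp add: mult_ac)
            ultimately show ?thesis by linarith
          qed
          finally show "N (sc c (z - u j)) < \<delta>" .
        qed
        have T3: "sc c (Ds j) \<in> X" using Dl_in[OF DsD] .
        have e1: "sc (pi ^ j) (Xs j) = u j + Ds j + ye" unfolding u_def w_def by simp
        have "sc (c * pi ^ j) (Xs j) = sc c (sc (pi ^ j) (Xs j))" by simp
        also have "\<dots> = sc c (u j + Ds j + ye)" by (simp only: e1)
        finally have "sc (c * pi ^ j) (Xs j) + sc c (z - u j) - sc c (Ds j) = sc c (u j + Ds j + ye) + sc c (z - u j) - sc c (Ds j)"
          by simp
        also have "\<dots> = sc c ((u j + Ds j + ye) + (z - u j) - Ds j)"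
          by (simp only: scale_right_distrib scale_right_diff_distrib)
        also have "(u j + Ds j + ye) + (z - u j) - Ds j = l" unfolding l_def by (simp add: algebra_simps)
        finally have "sc c l = sc (c * pi ^ j) (Xs j) + sc c (z - u j) - sc c (Ds j)" by simp
        thus ?thesis using ac_diff[OF ac ac_add[OF ac T1 T2] T3] by simp
      qed
    qed
    have zV: "z \<in> V" using WV z(1) by blast
    have kl: "k l = 1" unfolding l_def using k_add[OF yeV zV] kye kW[OF z(1)] by simp
    show ?thesis
    proof (intro exI ballI)
      fix x assume x: "x \<in> X"
      define x2 where "x2 = x - sc (k x) l"
      have x2X: "x2 \<in> X" unfolding x2_def using ac_diff[OF ac x Dl_in[OF lD]] .
      have s1: "sc (k x) l \<in> V" by (rule subspace_scale[OF subV lV])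
      have "k x2 = k x - k (sc (k x) l)" unfolding x2_def by (rule k_diff[OF XinV[OF x] s1])
      also have "\<dots> = k x - k x * k l" using k_sc[OF lV] by simp
      finally have "k x2 = k x - k x * k l" .
      hence "k x2 = 0" using kl by simp
      hence "x2 \<in> X'" using xX' x2X by blast
      then obtain d' where d': "d' \<in> Dl X'" "N (x2 - d') \<le> R'" using R' by blast
      have "sc (k x) l + d' \<in> Dl X" using Dl_add[OF ac Dl_sc[OF lD] ] d'(1) DlXX by blast
      moreover have "x - (sc (k x) l + d') = x2 - d'" unfolding x2_def by simp
      ultimately show "\<exists>d\<in>Dl X. N (x - d) \<le> R'" using d'(2) by metis
    qed
  qed
qed

end

context navs begin

lemma fin_uniform_k:
  fixes P :: "'a \<Rightarrow> nat \<Rightarrow> bool"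
  assumes "finite I" "\<forall>b\<in>I. \<exists>k0. \<forall>k\<ge>k0. P b k"
  shows "\<exists>K. \<forall>b\<in>I. P b K"
proof -
  obtain f where f: "\<And>b. b \<in> I \<Longrightarrow> \<forall>k\<ge>f b. P b k" using assms(2) by metis
  have "\<forall>b\<in>I. f b \<le> Max (insert 0 (f ` I))" using assms(1) by auto
  thus ?thesis using f by blast
qed

lemma fin_pos_lower:
  assumes "finite I" "\<And>b. b \<in> I \<Longrightarrow> g b > (0::real)"
  shows "\<exists>m>0. \<forall>b\<in>I. m \<le> g b"
  using assms
proof (induct I rule: finite_induct)
  case empty show ?case by (rule exI[of _ 1]) simp
next
  case (insert x F)
  then obtain m where m: "m > 0" "\<forall>b\<in>F. m \<le> g b" by auto
  show ?case using m insert.prems by (intro exI[of _ "min m (g x)"]) auto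
qed

lemma ac_hull: "abs_convex v sc (aco v sc S)"
  unfolding aco_def by (rule hull_in) (unfold abs_convex_def, blast)

lemma main_navs:
  assumes lcA: "local_compactoid v sc N A" and cw: "complete_wrt N (span A)"
  shows "\<exists>B D. compactoid v sc N B \<and> subspace D \<and> finite_type v sc N D \<and> A = msum B D"
proof -
  have ac: "abs_convex v sc A" and lc: "\<forall>U. zero_nhd N U \<longrightarrow> (\<exists>S. finite S \<and> A \<subseteq> msum U (span S))"
    using lcA unfolding local_compactoid_def by auto
  obtain S0 where S0: "finite S0" "span A \<subseteq> span S0" using findim[OF ac lc cw] by blast
  obtain Bs where Bs: "Bs \<subseteq> A" "independent Bs" "A \<subseteq> span Bs" using maximal_independent_subset[of A] by blast
  have finBs: "finite Bs" using independent_span_bound[OF S0(1) Bs(2)] Bs(1) S0(2) span_superset by blast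
  have spBs: "span Bs = span A"
  proof
    show "span Bs \<subseteq> span A" using Bs(1) by (rule span_mono)
    show "span A \<subseteq> span Bs" using Bs(3) by (rule span_minimal) simp
  qed
  define t :: real where "t = 1 / 2"
  obtain y0 where y0: "orth (t ^ card Bs) Bs y0" "span (y0 ` Bs) = span Bs" "\<forall>b\<in>Bs. y0 b \<in> span Bs"
    using orth_exists[of t Bs] finBs Bs(2) unfolding t_def by auto
  define \<tau> where "\<tau> = t ^ card Bs"
  have "\<forall>b\<in>Bs. \<exists>k0. \<forall>k\<ge>k0. sc (pi ^ k) (y0 b) \<in> A"
    using span_pow[OF ac] y0(3) spBs by blast
  then obtain K where K: "\<And>b. b \<in> Bs \<Longrightarrow> sc (pi ^ K) (y0 b) \<in> A"
    using fin_uniform_k[OF finBs, of "\<lambda>b k. sc (pi ^ k) (y0 b) \<in> A"] by blast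
  define c where "c = pi ^ K"
  have c0: "c \<noteq> 0" unfolding c_def using pi_ne0 by simp
  define y where "y b = sc c (y0 b)" for b
  have yA: "y b \<in> A" if "b \<in> Bs" for b using K[OF that] unfolding y_def c_def .
  have o: "orth \<tau> Bs y"
    unfolding orth_def
  proof (intro conjI allI ballI)
    show "0 < \<tau>" using y0(1) unfolding orth_def \<tau>_def by auto
    fix b assume b: "b \<in> Bs"
    show "y b \<noteq> 0" using y0(1) b c0 unfolding orth_def y_def by auto
  next
    fix \<alpha> :: "'e \<Rightarrow> 'k" and b assume b: "b \<in> Bs"
    have "\<tau> * v (\<alpha> b * c) * N (y0 b) \<le> N (\<Sum>c'\<in>Bs. sc (\<alpha> c' * c) (y0 c'))"
      unfolding \<tau>_def by (rule orth_ineq[OF y0(1) b])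
    thus "\<tau> * v (\<alpha> b) * N (y b) \<le> N (\<Sum>c'\<in>Bs. sc (\<alpha> c') (y c'))"
      unfolding y_def by (simp add: N_sc v_mult mult_ac)
  qed
  have spy: "span (y ` Bs) = span A"
  proof -
    have "y ` Bs = (\<lambda>x. sc c x) ` (y0 ` Bs)" unfolding y_def by auto
    hence "span (y ` Bs) = span (y0 ` Bs)"
      using span_image_scale[of "y0 ` Bs" "\<lambda>_. c"] finBs c0 by simp
    thus ?thesis using y0(2) spBs by simp
  qed
  have Npos: "\<And>b. b \<in> Bs \<Longrightarrow> N (y b) > 0" using o N_pos unfolding orth_def by auto
  obtain m where m: "m > 0" "\<And>b. b \<in> Bs \<Longrightarrow> m \<le> N (y b)" using fin_pos_lower[of Bs "\<lambda>b. N (y b)", OF finBs Npos] by blast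
  have \<tau>pos: "\<tau> > 0" using o unfolding orth_def by auto
  have coef: "v (\<alpha> b) \<le> N x / (\<tau> * m)" if "x = (\<Sum>c\<in>Bs. sc (\<alpha> c) (y c))" "b \<in> Bs" for x \<alpha> b
  proof -
    have "v (\<alpha> b) \<le> N x / (\<tau> * N (y b))" using orth_coeff[OF o that(2)] that(1) by simp
    also have "\<dots> \<le> N x / (\<tau> * m)" using m that(2) \<tau>pos N_nonneg[of x] Npos[OF that(2)]
      by (intro divide_left_mono mult_left_mono mult_pos_pos) auto
    finally show ?thesis .
  qed
  have AV: "A \<subseteq> span (y ` Bs)" using spy span_superset by blast
  define \<delta> where "\<delta> = \<tau> * m"
  have \<delta>pos: "\<delta> > 0" unfolding \<delta>_def using \<tau>pos m by simp
  have ball: "x \<in> A" if xs: "x \<in> span (y ` Bs)" and xN: "N x < \<delta>" for x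
  proof -
    obtain \<alpha> where \<alpha>: "x = (\<Sum>c\<in>Bs. sc (\<alpha> c) (y c))" using span_image_rep[OF finBs xs] by blast
    have "v (\<alpha> b) \<le> 1" if "b \<in> Bs" for b
    proof -
      have "v (\<alpha> b) \<le> N x / \<delta>" using coef[OF \<alpha> that] unfolding \<delta>_def .
      also have "\<dots> \<le> 1" using xN \<delta>pos by simp
      finally show ?thesis .
    qed
    thus ?thesis unfolding \<alpha> using yA by (intro ac_sum_sc[OF ac]) auto
  qed
  obtain R where R: "\<And>x. x \<in> A \<Longrightarrow> \<exists>d\<in>Dl A. N (x - d) \<le> R"
    using KL[OF finBs o ac AV \<delta>pos ball] by blast
  have Rnn: "R \<ge> 0"
  proof -
    obtain d where "d \<in> Dl A" "N (0 - d) \<le> R" using R[OF ac_zero[OF ac]] by blast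
    thus ?thesis using N_nonneg[of "0 - d"] by linarith
  qed
  define B where "B = {x\<in>A. N x \<le> R}"
  define D where "D = Dl A"
  have acB: "abs_convex v sc B"
    unfolding abs_convex_def B_def
  proof (intro conjI ballI allI impI)
    show "0 \<in> {x \<in> A. N x \<le> R}" using ac_zero[OF ac] Rnn by simp
    fix x y assume "x \<in> {x \<in> A. N x \<le> R}" "y \<in> {x \<in> A. N x \<le> R}"
    thus "x + y \<in> {x \<in> A. N x \<le> R}" using ac_add[OF ac] N_ultra[of x y] by auto
  next
    fix a x assume h: "v a \<le> 1 \<and> x \<in> {x \<in> A. N x \<le> R}"
    have "N (sc a x) = v a * N x" by (simp add: N_sc)
    also have "\<dots> \<le> 1 * R" using h v_nonneg[of a] N_nonneg[of x] by (intro mult_mono) auto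
    finally show "sc a x \<in> {x \<in> A. N x \<le> R}" using h ac_sc[OF ac] by auto
  qed
  have compB: "compactoid v sc N B"
    unfolding compactoid_def
  proof (intro conjI allI impI acB)
    fix U assume U: "zero_nhd N U"
    have U0: "0 \<in> U" using U unfolding zero_nhd_def by auto
    have q0: "R / (\<tau> * m) \<ge> 0" using Rnn \<tau>pos m by simp
    hence q: "R / (\<tau> * m) + 1 > 0" by linarith
    obtain \<mu> where \<mu>: "R / (\<tau> * m) + 1 \<le> v \<mu>" "v \<mu> \<le> (R / (\<tau> * m) + 1) / v pi"
      using scale_exists[OF q] by blast
    have v\<mu>: "v \<mu> > 0" using \<mu>(1) q by linarith
    hence \<mu>0: "\<mu> \<noteq> 0" by auto
    define S where "S = (\<lambda>b. sc \<mu> (y b)) ` Bs"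
    show "\<exists>S. finite S \<and> B \<subseteq> msum U (aco v sc S)"
    proof (intro exI conjI subsetI)
      show "finite S" unfolding S_def using finBs by simp
      fix x assume x: "x \<in> B"
      hence xA: "x \<in> A" and xR: "N x \<le> R" unfolding B_def by auto
      obtain \<alpha> where \<alpha>: "x = (\<Sum>c\<in>Bs. sc (\<alpha> c) (y c))" using span_image_rep[OF finBs] AV xA by blast
      have "x = (\<Sum>b\<in>Bs. sc (\<alpha> b / \<mu>) (sc \<mu> (y b)))" unfolding \<alpha> using \<mu>0 by simp
      also have "\<dots> \<in> aco v sc S"
      proof (rule ac_sum_sc[OF ac_hull])
        fix b assume b: "b \<in> Bs"
        have "v (\<alpha> b) \<le> N x / (\<tau> * m)" by (rule coef[OF \<alpha> b])
        also have "\<dots> \<le> R / (\<tau> * m)" using xR \<tau>pos m by (simp add: divide_right_mono)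
        also have "\<dots> \<le> v \<mu>" using \<mu>(1) by simp
        finally have "v (\<alpha> b / \<mu>) \<le> 1" using v\<mu> by (simp add: v_divide)
        moreover have "sc \<mu> (y b) \<in> aco v sc S" unfolding aco_def S_def using b by (intro hull_inc) auto
        ultimately show "v (\<alpha> b / \<mu>) \<le> 1 \<and> sc \<mu> (y b) \<in> aco v sc S" by simp
      qed
      finally have "x \<in> aco v sc S" .
      thus "x \<in> msum U (aco v sc S)" unfolding msum_def using U0 by force
    qed
  qed
  have subD: "subspace D" unfolding D_def by (rule Dl_subspace[OF ac])
  have DA: "D \<subseteq> A" unfolding D_def by (rule Dl_sub)
  have ftD: "finite_type v sc N D"
    unfolding finite_type_def
  proof (intro allI impI)
    fix p assume p: "nonarch_seminorm_on v sc D p \<and> continuous_on_norm N D p"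
    obtain SD where SD: "SD \<subseteq> D" "independent SD" "D \<subseteq> span SD" using maximal_independent_subset[of D] by blast
    have finSD: "finite SD" using independent_span_bound[OF S0(1) SD(2)] SD(1) DA S0(2) span_superset by blast
    have D0: "0 \<in> D" using subD by (simp add: subspace_0)
    have "p (sc 0 0) = v 0 * p 0" using p D0 unfolding nonarch_seminorm_on_def by blast
    hence p0: "p 0 = 0" by simp
    show "\<exists>S. finite S \<and> S \<subseteq> D \<and> D \<subseteq> msum (span S) {x \<in> D. p x = 0}"
    proof (intro exI conjI)
      show "finite SD" "SD \<subseteq> D" using finSD SD(1) by auto
      show "D \<subseteq> msum (span SD) {x \<in> D. p x = 0}"
      proof
        fix x assume "x \<in> D"
        hence "x \<in> span SD" using SD(3) by blast
        thus "x \<in> msum (span SD) {x \<in> D. p x = 0}" unfolding msum_def using D0 p0 by force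
      qed
    qed
  qed
  have eqA: "A = msum B D"
  proof
    show "A \<subseteq> msum B D"
    proof
      fix x assume x: "x \<in> A"
      obtain d where d: "d \<in> Dl A" "N (x - d) \<le> R" using R[OF x] by blast
      have "x - d \<in> A" using ac_diff[OF ac x] d(1) Dl_sub by blast
      hence "x - d \<in> B" using d(2) unfolding B_def by simp
      moreover have "x = (x - d) + d" by simp
      ultimately show "x \<in> msum B D" unfolding msum_def D_def using d(1) by blast
    qed
    show "msum B D \<subseteq> A" unfolding msum_def B_def using DA ac_add[OF ac] by auto
  qed
  show ?thesis using compB subD ftD eqA by blast
qed

end

theorem mainTheorem12:
  fixes v :: "'k::field \<Rightarrow> real"
    and sc :: "'k \<Rightarrow> 'e::ab_group_add \<Rightarrow> 'e"
    and N :: "'e \<Rightarrow> real"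
    and A :: "'e set"
  assumes "nonarch_abs v" and "nontrivial_abs v" and "complete_abs v"
    and "vector_space sc"
    and "nonarch_norm v sc N"
    and "local_compactoid v sc N A"
    and "complete_wrt N (module.span sc A)"
  shows "\<exists>B D. compactoid v sc N B \<and> module.subspace sc D \<and>
           finite_type v sc N D \<and> A = msum B D"
proof -
  have vnn: "\<And>a. v a \<ge> 0" and v0: "\<And>a. v a = 0 \<longleftrightarrow> a = 0" and vm: "\<And>a b. v (a * b) = v a * v b"
    using assms(1) unfolding nonarch_abs_def by auto
  obtain x where x: "x \<noteq> 0" "v x \<noteq> 1" using assms(2) unfolding nontrivial_abs_def by blast
  have vx: "v x > 0" using x vnn v0 by (metis less_eq_real_def)
  have v1: "v 1 = 1"
  proof -
    have "v 1 = v 1 * v 1" using vm[of 1 1] by simp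
    moreover have "v 1 \<noteq> 0" using v0 by simp
    ultimately show ?thesis by (metis mult_cancel_left2)
  qed
  obtain p where p: "0 < v p" "v p < 1"
  proof (cases "v x < 1")
    case True thus ?thesis using that vx by blast
  next
    case False
    hence gt: "v x > 1" using x(2) by simp
    have "v (inverse x) * v x = 1" using vm[of "inverse x" x] x v1 by simp
    hence "v (inverse x) = inverse (v x)" using vx by (simp add: field_simps)
    moreover have "0 < inverse (v x)" "inverse (v x) < 1" using gt by (auto simp: inverse_less_1_iff)
    ultimately show ?thesis using that[of "inverse x"] by simp
  qed
  have "navs sc v N p" by (intro navs.intro assms(4) navs_axioms.intro) (use assms p in auto)
  then interpret navs sc v N p .
  show ?thesis using main_navs assms(6,7) by blast
qed

end
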